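(* Let $G$ be a finitely generated residually finite group with CFQ. (1) If there exist a finite generating set $S$ of $G$ and a recursive function $h:\mathbb{N}\to\mathbb{N}$ with $\rho_S(n)\leq h(n)$ for all $n$, then $G$ has solvable word problem. (2) If $G$ has solvable word problem, then for every finite generating set $S$ of $G$ the function $\rho_S$ is recursive. Consequently, a finitely generated residually finite group with CFQ has solvable word problem if and only if $\rho_S$ is recursive for every finite generating set $S$.
   Context: For a residually finite group $G$ with finite generating set $S$, the depth function $\rho_S:\mathbb{N}\to\mathbb{N}$ assigns to $n$ the smallest $k$ such that for every non-trivial element $g$ of $G$ of word length at most $n$ with respect to $S$, there is a finite quotient of $G$ of order at most $k$ in which the image of $g$ is non-trivial. A marked finite group is a pair $(F,f)$ with $F$ a finite group (given by its multiplication table) and $f:S\to F$ a function; $G$ has CFQ if there is an algorithm which, given $(F,f)$, decides whether $f$ extends to a group homomorphism $G\to F$. *)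

theory Defs
  imports "HOL-Algebra.Algebra" "HOL-Library.Nat_Bijection"
begin

fun prec :: "(nat list \<Rightarrow> nat) \<Rightarrow> (nat list \<Rightarrow> nat) \<Rightarrow> nat \<Rightarrow> nat list \<Rightarrow> nat" where
  "prec f g 0 xs = f xs"
| "prec f g (Suc y) xs = g (y # prec f g y xs # xs)"

text \<open>total_rec n f: f (restricted to argument lists of length n) is a total
  (mu-)recursive function of arity n (Kleene: closure of the basic functions under
  composition, primitive recursion and regular minimisation).\<close>
inductive total_rec :: "nat \<Rightarrow> (nat list \<Rightarrow> nat) \<Rightarrow> bool" where
  zero: "total_rec n (\<lambda>xs. 0)"
| succ: "total_rec 1 (\<lambda>xs. Suc (hd xs))"
| proj: "i < n \<Longrightarrow> total_rec n (\<lambda>xs. xs ! i)"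
| comp: "total_rec m f \<Longrightarrow> length gs = m \<Longrightarrow> list_all (total_rec n) gs
          \<Longrightarrow> total_rec n (\<lambda>xs. f (map (\<lambda>g. g xs) gs))"
| prim_rec: "total_rec n f \<Longrightarrow> total_rec (Suc (Suc n)) g
          \<Longrightarrow> total_rec (Suc n) (\<lambda>xs. prec f g (hd xs) (tl xs))"
| mu: "total_rec (Suc n) f \<Longrightarrow> (\<forall>xs. length xs = n \<longrightarrow> (\<exists>y. f (y # xs) = 0))
          \<Longrightarrow> total_rec n (\<lambda>xs. LEAST y. f (y # xs) = 0)"
| ext: "total_rec n f \<Longrightarrow> (\<forall>xs. length xs = n \<longrightarrow> g xs = f xs) \<Longrightarrow> total_rec n g"

definition recursive_fun :: "(nat \<Rightarrow> nat) \<Rightarrow> bool" where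
  "recursive_fun h \<longleftrightarrow> total_rec 1 (\<lambda>xs. h (hd xs))"

definition decidable_set :: "nat set \<Rightarrow> bool" where
  "decidable_set A \<longleftrightarrow> (\<exists>c. recursive_fun c \<and> (\<forall>n. c n = (if n \<in> A then 1 else 0)))"

text \<open>A finite generating set S is given as a list ss with set ss = S.
  Letters are natural numbers: 2*i stands for ss!i, 2*i+1 for its inverse.\<close>

definition gen_list :: "('a, 'b) monoid_scheme \<Rightarrow> 'a list \<Rightarrow> bool" where
  "gen_list G ss \<longleftrightarrow> set ss \<subseteq> carrier G \<and> generate G (set ss) = carrier G"

definition fin_gen :: "('a, 'b) monoid_scheme \<Rightarrow> bool" where
  "fin_gen G \<longleftrightarrow> (\<exists>ss. gen_list G ss)"

definition valid_word :: "'a list \<Rightarrow> nat list \<Rightarrow> bool" where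
  "valid_word ss w \<longleftrightarrow> (\<forall>a\<in>set w. a < 2 * length ss)"

definition letter_val :: "('a, 'b) monoid_scheme \<Rightarrow> 'a list \<Rightarrow> nat \<Rightarrow> 'a" where
  "letter_val G ss a = (if even a then ss ! (a div 2) else inv\<^bsub>G\<^esub> (ss ! (a div 2)))"

definition word_eval :: "('a, 'b) monoid_scheme \<Rightarrow> 'a list \<Rightarrow> nat list \<Rightarrow> 'a" where
  "word_eval G ss w = foldr (\<lambda>a acc. letter_val G ss a \<otimes>\<^bsub>G\<^esub> acc) w \<one>\<^bsub>G\<^esub>"

definition word_problem_set :: "('a, 'b) monoid_scheme \<Rightarrow> 'a list \<Rightarrow> nat set" where
  "word_problem_set G ss =
     {list_encode w | w. valid_word ss w \<and> word_eval G ss w = \<one>\<^bsub>G\<^esub>}"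

definition solvable_WP :: "('a, 'b) monoid_scheme \<Rightarrow> bool" where
  "solvable_WP G \<longleftrightarrow> (\<exists>ss. gen_list G ss \<and> decidable_set (word_problem_set G ss))"

text \<open>Finite quotients of G correspond to normal subgroups of finite index; the
  order of the quotient G/N is the number of cosets.\<close>
definition finite_quot_detects :: "('a, 'b) monoid_scheme \<Rightarrow> 'a set \<Rightarrow> 'a \<Rightarrow> bool" where
  "finite_quot_detects G N g \<longleftrightarrow> N \<lhd> G \<and> finite (rcosets\<^bsub>G\<^esub> N) \<and> g \<notin> N"

definition residually_finite :: "('a, 'b) monoid_scheme \<Rightarrow> bool" where
  "residually_finite G \<longleftrightarrow>
     (\<forall>g\<in>carrier G. g \<noteq> \<one>\<^bsub>G\<^esub> \<longrightarrow> (\<exists>N. finite_quot_detects G N g))"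

definition depth :: "('a, 'b) monoid_scheme \<Rightarrow> 'a list \<Rightarrow> nat \<Rightarrow> nat" where
  "depth G ss n = (LEAST k. \<forall>w. valid_word ss w \<and> length w \<le> n \<and> word_eval G ss w \<noteq> \<one>\<^bsub>G\<^esub>
       \<longrightarrow> (\<exists>N. finite_quot_detects G N (word_eval G ss w) \<and> card (rcosets\<^bsub>G\<^esub> N) \<le> k))"

text \<open>A finite group is given by a multiplication table t on {0..<length t}.\<close>
definition table_group :: "nat list list \<Rightarrow> nat monoid" where
  "table_group t = \<lparr>carrier = {..<length t}, monoid.mult = (\<lambda>a b. t ! a ! b),
     one = (SOME e. e < length t \<and> (\<forall>a<length t. t ! e ! a = a \<and> t ! a ! e = a))\<rparr>"

definition valid_table :: "nat list list \<Rightarrow> bool" where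
  "valid_table t \<longleftrightarrow> (\<forall>r\<in>set t. length r = length t \<and> (\<forall>x\<in>set r. x < length t))
     \<and> group (table_group t)"

text \<open>A marking f : S \<rightarrow> F is given as a list fl with fl ! i = f (ss ! i).\<close>
definition marked_code :: "nat list list \<Rightarrow> nat list \<Rightarrow> nat" where
  "marked_code t fl = prod_encode (list_encode (map list_encode t), list_encode fl)"

definition extends_to_hom :: "('a, 'b) monoid_scheme \<Rightarrow> 'a list \<Rightarrow> nat list list \<Rightarrow> nat list \<Rightarrow> bool" where
  "extends_to_hom G ss t fl \<longleftrightarrow>
     (\<exists>\<phi>\<in>hom G (table_group t). \<forall>i<length ss. \<phi> (ss ! i) = fl ! i)"

definition CFQ_wrt :: "('a, 'b) monoid_scheme \<Rightarrow> 'a list \<Rightarrow> bool" where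
  "CFQ_wrt G ss \<longleftrightarrow> (\<exists>c. recursive_fun c \<and>
     (\<forall>t fl. valid_table t \<and> length fl = length ss \<and> (\<forall>x\<in>set fl. x < length t) \<longrightarrow>
        (c (marked_code t fl) = 1 \<longleftrightarrow> extends_to_hom G ss t fl)))"

definition CFQ :: "('a, 'b) monoid_scheme \<Rightarrow> bool" where
  "CFQ G \<longleftrightarrow> (\<exists>ss. gen_list G ss \<and> CFQ_wrt G ss)"

end

theory Submission
  imports Defs
begin


lemma tr_comp1: "total_rec 1 F \<Longrightarrow> total_rec n A \<Longrightarrow> total_rec n (\<lambda>xs. F [A xs])"
  using total_rec.comp[of 1 F "[A]" n] by simp

lemma tr_comp2: "total_rec 2 F \<Longrightarrow> total_rec n A \<Longrightarrow> total_rec n B \<Longrightarrow> total_rec n (\<lambda>xs. F [A xs, B xs])"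
  using total_rec.comp[of 2 F "[A,B]" n] by simp

lemma tr_ext: "total_rec n f \<Longrightarrow> (\<And>xs. length xs = n \<Longrightarrow> g xs = f xs) \<Longrightarrow> total_rec n g"
  using total_rec.ext by blast

lemma len1: "length xs = Suc 0 \<Longrightarrow> xs = [xs!0]"
  by (cases xs) auto
lemma len2: "length xs = Suc (Suc 0) \<Longrightarrow> xs = [xs!0, xs!1]"
  by (cases xs; cases "tl xs") auto
lemma len3: "length xs = Suc (Suc (Suc 0)) \<Longrightarrow> xs = [xs!0, xs!1, xs!2]"
  by (cases xs; cases "tl xs"; cases "tl (tl xs)") auto

lemma tr_proj: "i < n \<Longrightarrow> total_rec n (\<lambda>xs. xs ! i)"
  by (rule total_rec.proj)

lemma tr_PR:
  assumes b: "total_rec 1 (\<lambda>xs. b (hd xs))"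
    and s: "total_rec 3 (\<lambda>xs. s (xs!0) (xs!1) (xs!2))"
    and R0: "\<And>x. R 0 x = b x" and RS: "\<And>n x. R (Suc n) x = s n (R n x) x"
  shows "total_rec 2 (\<lambda>xs. R (xs!0) (xs!1))"
proof -
  let ?F = "\<lambda>xs. b (hd xs)" and ?S = "\<lambda>xs. s (xs!0) (xs!1) (xs!2)"
  have P: "total_rec 2 (\<lambda>xs. prec ?F ?S (hd xs) (tl xs))"
  proof -
    have e: "(3::nat) = Suc (Suc 1)" "(2::nat) = Suc 1" by auto
    show ?thesis using total_rec.prim_rec[OF b, of ?S] s unfolding e by blast
  qed
  have Q: "prec ?F ?S n [x] = R n x" for n x
    by (induction n) (auto simp: R0 RS)
  show ?thesis
  proof (rule tr_ext[OF P], goal_cases)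
    case (1 xs)
    then obtain a b where "xs = [a,b]" by (metis len2 numeral_2_eq_2)
    then show "R (xs!0) (xs!1) = prec ?F ?S (hd xs) (tl xs)" using Q by simp
  qed
qed


lemma tr_ext1: "total_rec 1 f \<Longrightarrow> (\<And>a. g [a] = f [a]) \<Longrightarrow> total_rec 1 g"
  by (erule tr_ext) (metis len1 One_nat_def)
lemma tr_ext2: "total_rec 2 f \<Longrightarrow> (\<And>a b. g [a,b] = f [a,b]) \<Longrightarrow> total_rec 2 g"
  by (erule tr_ext) (metis len2 numeral_2_eq_2)
lemma tr_ext3: "total_rec 3 f \<Longrightarrow> (\<And>a b c. g [a,b,c] = f [a,b,c]) \<Longrightarrow> total_rec 3 g"
  by (erule tr_ext) (metis len3 numeral_3_eq_3)

lemma tr_succ1: "total_rec n A \<Longrightarrow> total_rec n (\<lambda>xs. Suc (A xs))"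
  using tr_comp1[OF total_rec.succ] by simp

lemma tr_zero0: "total_rec n (\<lambda>xs. 0)" by (rule total_rec.zero)

lemma tr_hd: "total_rec 1 (\<lambda>xs. hd xs)"
  by (rule tr_ext1[OF tr_proj[of 0 1]]) auto

lemma tr_add: "total_rec 2 (\<lambda>xs. xs!0 + xs!1)"
proof -
  have "total_rec 2 (\<lambda>xs. (\<lambda>n x. n + x) (xs!0) (xs!1))"
    apply (rule tr_PR[where b="\<lambda>x. x" and s="\<lambda>n r x. Suc r"])
       apply (rule tr_hd)
      apply (rule tr_succ1, rule tr_proj, simp)
     apply simp_all
    done
  then show ?thesis by simp
qed

lemma tr_add_n: "total_rec n A \<Longrightarrow> total_rec n B \<Longrightarrow> total_rec n (\<lambda>xs. A xs + B xs)"
  using tr_comp2[OF tr_add] by simp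

lemma tr_pred: "total_rec 1 (\<lambda>xs. hd xs - 1)"
proof -
  have "total_rec 2 (\<lambda>xs. (\<lambda>n x. n - 1) (xs!0) (xs!1))"
    apply (rule tr_PR[where b="\<lambda>x. 0" and s="\<lambda>n r x. n"])
       apply (rule tr_zero0)
      apply (rule tr_proj, simp)
     apply simp_all
    done
  from tr_comp2[OF this tr_hd tr_zero0] show ?thesis
    by (rule tr_ext1) simp
qed

lemma tr_sub: "total_rec 2 (\<lambda>xs. xs!1 - xs!0)"
proof -
  have "total_rec 2 (\<lambda>xs. (\<lambda>n x. x - n) (xs!0) (xs!1))"
    apply (rule tr_PR[where b="\<lambda>x. x" and s="\<lambda>n r x. r - 1"])
       apply (rule tr_hd)
    using tr_comp1[OF tr_pred tr_proj[of 1 3]] apply simp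
     apply simp_all
    done
  then show ?thesis by simp
qed

lemma tr_sub_n: "total_rec n A \<Longrightarrow> total_rec n B \<Longrightarrow> total_rec n (\<lambda>xs. A xs - B xs)"
  using tr_comp2[OF tr_sub, of n B A] by simp

lemma tr_mult: "total_rec 2 (\<lambda>xs. xs!0 * xs!1)"
proof -
  have "total_rec 2 (\<lambda>xs. (\<lambda>n x. n * x) (xs!0) (xs!1))"
    apply (rule tr_PR[where b="\<lambda>x. 0" and s="\<lambda>n r x. r + x"])
       apply (rule tr_zero0)
      apply (rule tr_add_n; rule tr_proj; simp)
     apply simp_all
    done
  then show ?thesis by simp
qed

lemma tr_mult_n: "total_rec n A \<Longrightarrow> total_rec n B \<Longrightarrow> total_rec n (\<lambda>xs. A xs * B xs)"
  using tr_comp2[OF tr_mult] by simp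

lemma tr_triangle: "total_rec 1 (\<lambda>xs. triangle (hd xs))"
proof -
  have "total_rec 2 (\<lambda>xs. (\<lambda>n x. triangle n) (xs!0) (xs!1))"
    apply (rule tr_PR[where b="\<lambda>x. 0" and s="\<lambda>n r x. r + Suc n"])
       apply (rule tr_zero0)
      apply (rule tr_add_n, rule tr_proj, simp, rule tr_succ1, rule tr_proj, simp)
     apply simp_all
    done
  from tr_comp2[OF this tr_hd tr_zero0] show ?thesis
    by (rule tr_ext1) simp
qed

lemma tr_triangle_n: "total_rec n A \<Longrightarrow> total_rec n (\<lambda>xs. triangle (A xs))"
  using tr_comp1[OF tr_triangle] by simp

lemma tr_penc: "total_rec 2 (\<lambda>xs. prod_encode (xs!0, xs!1))"
proof -
  have "total_rec 2 (\<lambda>xs. triangle (xs!0 + xs!1) + xs!0)"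
    by (intro tr_add_n tr_triangle_n tr_proj) auto
  then show ?thesis by (simp add: prod_encode_def)
qed

lemma tr_penc_n: "total_rec n A \<Longrightarrow> total_rec n B \<Longrightarrow> total_rec n (\<lambda>xs. prod_encode (A xs, B xs))"
  using tr_comp2[OF tr_penc] by simp

section \<open>Pairing\<close>

definition pfst :: "nat \<Rightarrow> nat" where "pfst n = fst (prod_decode n)"
definition psnd :: "nat \<Rightarrow> nat" where "psnd n = snd (prod_decode n)"

lemma pfst_penc[simp]: "pfst (prod_encode (a,b)) = a" by (simp add: pfst_def)
lemma psnd_penc[simp]: "psnd (prod_encode (a,b)) = b" by (simp add: psnd_def)
lemma penc_pfst_psnd[simp]: "prod_encode (pfst n, psnd n) = n" by (simp add: pfst_def psnd_def)

lemma triangle_mono: "y \<le> z \<Longrightarrow> triangle y \<le> triangle z"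
  by (induction z) (auto simp: le_Suc_eq)

lemma triangle_ge: "n \<le> triangle n"
  by (induction n) auto

definition kdec :: "nat \<Rightarrow> nat" where "kdec n = (LEAST y. n < triangle (Suc y))"

lemma kdec_eq: "kdec n = pfst n + psnd n"
proof -
  obtain a b where ab: "prod_decode n = (a,b)" by fastforce
  have n: "n = triangle (a+b) + a"
    using prod_decode_inverse[of n] ab by (simp add: prod_encode_def)
  have "(LEAST y. n < triangle (Suc y)) = a + b"
  proof (rule Least_equality)
    show "n < triangle (Suc (a + b))" using n by simp
    fix y assume "n < triangle (Suc y)"
    show "a + b \<le> y"
    proof (rule ccontr)
      assume "\<not> a + b \<le> y"
      then have "triangle (Suc y) \<le> triangle (a+b)" by (intro triangle_mono) simp
      then show False using n \<open>n < triangle (Suc y)\<close> by simp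
    qed
  qed
  then show ?thesis by (simp add: kdec_def pfst_def psnd_def ab)
qed

lemma pfst_eq: "pfst n = n - triangle (kdec n)"
proof -
  have "n = triangle (pfst n + psnd n) + pfst n"
  proof -
    have "prod_encode (pfst n, psnd n) = triangle (pfst n + psnd n) + pfst n"
      unfolding prod_encode_def by simp
    then show ?thesis by simp
  qed
  then show ?thesis by (simp add: kdec_eq)
qed

lemma psnd_eq: "psnd n = kdec n - pfst n"
  by (simp add: kdec_eq)

lemma tr_kdec: "total_rec 1 (\<lambda>xs. kdec (hd xs))"
proof -
  have F: "total_rec (Suc 1) (\<lambda>xs. Suc (xs!1) - triangle (Suc (xs!0)))"
    using tr_sub_n[OF tr_succ1[OF tr_proj[of 1 2]] tr_triangle_n[OF tr_succ1[OF tr_proj[of 0 2]]]]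
    by (simp add: numeral_2_eq_2)
  have ex: "\<forall>xs. length xs = 1 \<longrightarrow> (\<exists>y. (\<lambda>xs. Suc (xs!1) - triangle (Suc (xs!0))) (y # xs) = 0)"
  proof (intro allI impI)
    fix xs :: "nat list"
    have "Suc (xs!0) \<le> triangle (Suc (xs!0))" by (rule triangle_ge)
    then show "\<exists>y. (\<lambda>xs. Suc (xs!1) - triangle (Suc (xs!0))) (y # xs) = 0"
      by (intro exI[of _ "xs!0"]) simp
  qed
  have "total_rec 1 (\<lambda>xs. LEAST y. (\<lambda>xs. Suc (xs!1) - triangle (Suc (xs!0))) (y # xs) = 0)"
    by (rule total_rec.mu[OF F ex])
  then show ?thesis
    by (rule tr_ext1) (simp add: kdec_def less_Suc_eq_le)
qed

lemma tr_kdec_n: "total_rec n A \<Longrightarrow> total_rec n (\<lambda>xs. kdec (A xs))"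
  using tr_comp1[OF tr_kdec] by simp

lemma tr_pfst_n: "total_rec n A \<Longrightarrow> total_rec n (\<lambda>xs. pfst (A xs))"
  unfolding pfst_eq by (intro tr_sub_n tr_triangle_n tr_kdec_n)

lemma tr_psnd_n: "total_rec n A \<Longrightarrow> total_rec n (\<lambda>xs. psnd (A xs))"
  unfolding psnd_eq by (intro tr_sub_n tr_kdec_n tr_pfst_n)


lemma rec1_tr: "recursive_fun f \<Longrightarrow> total_rec n A \<Longrightarrow> total_rec n (\<lambda>xs. f (A xs))"
  unfolding recursive_fun_def using tr_comp1 by fastforce

lemma rI_id: "recursive_fun (\<lambda>x. x)"
  unfolding recursive_fun_def by (rule tr_hd)

lemma rI_const: "recursive_fun (\<lambda>x. k)"
  unfolding recursive_fun_def
proof (induction k)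
  case 0 show ?case by (rule tr_zero0)
next
  case (Suc k) show ?case using tr_succ1[OF Suc] .
qed

lemma rI_Suc: "recursive_fun f \<Longrightarrow> recursive_fun (\<lambda>x. Suc (f x))"
  unfolding recursive_fun_def by (rule tr_succ1)
lemma rI_add: "recursive_fun f \<Longrightarrow> recursive_fun g \<Longrightarrow> recursive_fun (\<lambda>x. f x + g x)"
  unfolding recursive_fun_def by (rule tr_add_n)
lemma rI_sub: "recursive_fun f \<Longrightarrow> recursive_fun g \<Longrightarrow> recursive_fun (\<lambda>x. f x - g x)"
  unfolding recursive_fun_def by (rule tr_sub_n)
lemma rI_mult: "recursive_fun f \<Longrightarrow> recursive_fun g \<Longrightarrow> recursive_fun (\<lambda>x. f x * g x)"
  unfolding recursive_fun_def by (rule tr_mult_n)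
lemma rI_penc: "recursive_fun f \<Longrightarrow> recursive_fun g \<Longrightarrow> recursive_fun (\<lambda>x. prod_encode (f x, g x))"
  unfolding recursive_fun_def by (rule tr_penc_n)
lemma rI_pfst: "recursive_fun f \<Longrightarrow> recursive_fun (\<lambda>x. pfst (f x))"
  unfolding recursive_fun_def by (rule tr_pfst_n)
lemma rI_psnd: "recursive_fun f \<Longrightarrow> recursive_fun (\<lambda>x. psnd (f x))"
  unfolding recursive_fun_def by (rule tr_psnd_n)
lemma rI_comp: "recursive_fun f \<Longrightarrow> recursive_fun g \<Longrightarrow> recursive_fun (\<lambda>x. f (g x))"
  unfolding recursive_fun_def using rec1_tr[of f 1 "\<lambda>xs. g (hd xs)"]
  by (simp add: recursive_fun_def)

definition rec2 :: "(nat \<Rightarrow> nat \<Rightarrow> nat) \<Rightarrow> bool" where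
  "rec2 F \<longleftrightarrow> recursive_fun (\<lambda>p. F (pfst p) (psnd p))"
definition rec3 :: "(nat \<Rightarrow> nat \<Rightarrow> nat \<Rightarrow> nat) \<Rightarrow> bool" where
  "rec3 F \<longleftrightarrow> recursive_fun (\<lambda>q. F (pfst q) (pfst (psnd q)) (psnd (psnd q)))"

lemma rI_app2: "rec2 F \<Longrightarrow> recursive_fun f \<Longrightarrow> recursive_fun g \<Longrightarrow> recursive_fun (\<lambda>x. F (f x) (g x))"
  unfolding rec2_def using rI_comp[of "\<lambda>p. F (pfst p) (psnd p)" "\<lambda>x. prod_encode (f x, g x)"] rI_penc
  by simp

lemma rI_app3: "rec3 F \<Longrightarrow> recursive_fun f \<Longrightarrow> recursive_fun g \<Longrightarrow> recursive_fun h
   \<Longrightarrow> recursive_fun (\<lambda>x. F (f x) (g x) (h x))"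
  unfolding rec3_def
  using rI_comp[of "\<lambda>q. F (pfst q) (pfst (psnd q)) (psnd (psnd q))" "\<lambda>x. prod_encode (f x, prod_encode (g x, h x))"] rI_penc
  by simp

lemma rec_PR:
  assumes b: "recursive_fun b" and s: "rec3 s"
    and R0: "\<And>x. R 0 x = b x" and RS: "\<And>n x. R (Suc n) x = s n (R n x) x"
  shows "rec2 R"
proof -
  have s3: "total_rec 3 (\<lambda>xs. s (xs!0) (xs!1) (xs!2))"
  proof -
    have A: "total_rec 3 (\<lambda>xs. prod_encode (xs!0, prod_encode (xs!1, xs!2)))"
      by (rule tr_penc_n, rule tr_proj, simp, rule tr_penc_n; rule tr_proj; simp)
    show ?thesis using rec1_tr[OF s[unfolded rec3_def] A] by simp
  qed
  have "total_rec 2 (\<lambda>xs. R (xs!0) (xs!1))"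
    by (rule tr_PR[OF b[unfolded recursive_fun_def] s3 R0 RS])
  from tr_comp2[OF this tr_pfst_n[OF tr_hd] tr_psnd_n[OF tr_hd]]
  show ?thesis unfolding rec2_def recursive_fun_def by simp
qed

lemma rec_mu:
  assumes F: "rec2 F" and ex: "\<And>x. \<exists>y. F y x = 0"
  shows "recursive_fun (\<lambda>x. LEAST y. F y x = 0)"
proof -
  have A: "total_rec 2 (\<lambda>xs. prod_encode (xs!0, xs!1))" by (rule tr_penc)
  have "total_rec 2 (\<lambda>xs. F (xs!0) (xs!1))"
    using rec1_tr[OF F[unfolded rec2_def] A] by simp
  then have F2: "total_rec (Suc 1) (\<lambda>xs. F (xs!0) (xs!1))" by (simp add: numeral_2_eq_2)
  have ex2: "\<forall>xs. length xs = 1 \<longrightarrow> (\<exists>y. (\<lambda>xs. F (xs!0) (xs!1)) (y # xs) = 0)"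
    using ex by simp
  have "total_rec 1 (\<lambda>xs. LEAST y. (\<lambda>xs. F (xs!0) (xs!1)) (y # xs) = 0)"
    by (rule total_rec.mu[OF F2 ex2])
  then show ?thesis unfolding recursive_fun_def
    by (rule tr_ext1) simp
qed

definition recP :: "(nat \<Rightarrow> bool) \<Rightarrow> bool" where
  "recP P \<longleftrightarrow> recursive_fun (\<lambda>x. if P x then 1 else 0)"

lemma rI_if: "recP P \<Longrightarrow> recursive_fun f \<Longrightarrow> recursive_fun g \<Longrightarrow> recursive_fun (\<lambda>x. if P x then f x else g x)"
proof -
  assume P: "recP P" and f: "recursive_fun f" and g: "recursive_fun g"
  have "recursive_fun (\<lambda>x. (if P x then 1 else 0) * f x + (1 - (if P x then 1 else 0)) * g x)"
    using P f g unfolding recP_def by (intro rI_add rI_mult rI_sub rI_const)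
  moreover have "(\<lambda>x. (if P x then 1 else 0) * f x + (1 - (if P x then 1 else 0)) * g x) = (\<lambda>x. if P x then f x else g x)"
    by (rule HOL.ext) simp
  ultimately show ?thesis by simp
qed

lemma rP_eq: "recursive_fun f \<Longrightarrow> recursive_fun g \<Longrightarrow> recP (\<lambda>x. f x = g x)"
proof -
  assume f: "recursive_fun f" and g: "recursive_fun g"
  have "recursive_fun (\<lambda>x. 1 - ((f x - g x) + (g x - f x)))"
    using f g by (intro rI_add rI_sub rI_const)
  moreover have "(\<lambda>x. 1 - ((f x - g x) + (g x - f x))) = (\<lambda>x. if f x = g x then 1 else 0)"
    by (rule HOL.ext) auto
  ultimately show ?thesis unfolding recP_def by simp
qed

lemma rP_less: "recursive_fun f \<Longrightarrow> recursive_fun g \<Longrightarrow> recP (\<lambda>x. f x < g x)"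
proof -
  assume f: "recursive_fun f" and g: "recursive_fun g"
  have "recursive_fun (\<lambda>x. 1 - (Suc (f x) - g x))"
    using f g by (intro rI_Suc rI_sub rI_const)
  moreover have "(\<lambda>x. 1 - (Suc (f x) - g x)) = (\<lambda>x. if f x < g x then 1 else 0)"
    by (rule HOL.ext) auto
  ultimately show ?thesis unfolding recP_def by simp
qed

lemma rP_not: "recP P \<Longrightarrow> recP (\<lambda>x. \<not> P x)"
proof -
  assume P: "recP P"
  have "recursive_fun (\<lambda>x. 1 - (if P x then 1 else 0))"
    using P unfolding recP_def by (intro rI_sub rI_const)
  moreover have "(\<lambda>x. 1 - (if P x then 1 else 0)) = (\<lambda>x. if \<not> P x then 1 else (0::nat))"
    by (rule HOL.ext) auto
  ultimately show ?thesis unfolding recP_def by simp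
qed

lemma rP_le: "recursive_fun f \<Longrightarrow> recursive_fun g \<Longrightarrow> recP (\<lambda>x. f x \<le> g x)"
  using rP_not[OF rP_less, of g f] by (simp add: not_less)

lemma rP_conj: "recP P \<Longrightarrow> recP Q \<Longrightarrow> recP (\<lambda>x. P x \<and> Q x)"
proof -
  assume P: "recP P" and Q: "recP Q"
  have "recursive_fun (\<lambda>x. (if P x then 1 else 0) * (if Q x then 1 else 0))"
    using P Q unfolding recP_def by (intro rI_mult)
  moreover have "(\<lambda>x. (if P x then 1 else 0) * (if Q x then 1 else (0::nat))) = (\<lambda>x. if P x \<and> Q x then 1 else 0)"
    by (rule HOL.ext) auto
  ultimately show ?thesis unfolding recP_def by simp
qed

lemma rP_disj: "recP P \<Longrightarrow> recP Q \<Longrightarrow> recP (\<lambda>x. P x \<or> Q x)"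
  using rP_not[OF rP_conj[OF rP_not rP_not], of P Q] by simp

lemma rP_imp: "recP P \<Longrightarrow> recP Q \<Longrightarrow> recP (\<lambda>x. P x \<longrightarrow> Q x)"
  using rP_disj[OF rP_not, of P Q] by simp

lemma rP_True: "recP (\<lambda>x. True)"
  unfolding recP_def using rI_const by simp

lemma rP_app2: "recP (\<lambda>p. P (pfst p) (psnd p)) \<Longrightarrow> recursive_fun f \<Longrightarrow> recursive_fun g \<Longrightarrow> recP (\<lambda>x. P (f x) (g x))"
  unfolding recP_def using rI_app2[of "\<lambda>a b. if P a b then 1 else 0" f g] unfolding rec2_def by simp

lemma rP_comp: "recP P \<Longrightarrow> recursive_fun f \<Longrightarrow> recP (\<lambda>x. P (f x))"
  unfolding recP_def using rI_comp[of "\<lambda>a. if P a then 1 else 0" f] by simp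

lemma rI_bleast:
  assumes f: "recursive_fun f" and P: "recP (\<lambda>p. P (pfst p) (psnd p))"
  shows "recursive_fun (\<lambda>x. LEAST i. i = f x \<or> P i x)"
proof -
  have "rec2 (\<lambda>y x. if y = f x \<or> P y x then 0 else 1)"
    unfolding rec2_def
    by (intro rI_if rP_disj rP_eq rI_pfst rI_comp[OF f] rI_psnd rI_id rI_const P)
  moreover have ex: "\<And>x. \<exists>y. (if y = f x \<or> P y x then 0 else 1) = (0::nat)" by auto
  ultimately have r: "recursive_fun (\<lambda>x. LEAST y. (if y = f x \<or> P y x then 0 else 1) = (0::nat))"
    by (rule rec_mu)
  have eq: "\<And>x y. ((if y = f x \<or> P y x then 0 else 1) = (0::nat)) = (y = f x \<or> P y x)" by simp
  show ?thesis using r unfolding eq .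
qed

lemma ball_least: "(\<forall>i<(n::nat). P i) \<longleftrightarrow> (LEAST i. i = n \<or> \<not> P i) = n"
proof
  assume a: "\<forall>i<n. P i"
  show "(LEAST i. i = n \<or> \<not> P i) = n"
  proof (rule Least_equality)
    show "n = n \<or> \<not> P n" by simp
    fix y assume "y = n \<or> \<not> P y"
    then show "n \<le> y" using a by (metis not_less order_refl)
  qed
next
  assume L: "(LEAST i. i = n \<or> \<not> P i) = n"
  show "\<forall>i<n. P i"
  proof (intro allI impI, rule ccontr)
    fix i assume "i < n" "\<not> P i"
    then have "(LEAST i. i = n \<or> \<not> P i) \<le> i" by (intro Least_le) simp
    then show False using L \<open>i < n\<close> by simp
  qed
qed

lemma rP_ball:
  assumes f: "recursive_fun f" and P: "recP (\<lambda>p. P (pfst p) (psnd p))"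
  shows "recP (\<lambda>x. \<forall>i<f x. P i x)"
proof -
  have "recP (\<lambda>x. (LEAST i. i = f x \<or> \<not> P i x) = f x)"
    by (intro rP_eq f rI_bleast rP_not P)
  then show ?thesis by (subst ball_least) 
qed

lemma rP_bex:
  assumes f: "recursive_fun f" and P: "recP (\<lambda>p. P (pfst p) (psnd p))"
  shows "recP (\<lambda>x. \<exists>i<f x. P i x)"
proof -
  have "recP (\<lambda>x. \<not> (\<forall>i<f x. \<not> P i x))"
    by (intro rP_not rP_ball f P)
  then show ?thesis by simp
qed


lemmas rI = rI_id rI_const rI_Suc rI_add rI_sub rI_mult rI_penc rI_pfst rI_psnd rI_if
  rP_eq rP_less rP_le rP_not rP_conj rP_disj rP_imp rP_True rP_ball rP_bex rI_bleast

section \<open>Lists\<close>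

definition ltl :: "nat \<Rightarrow> nat" where "ltl c = psnd (c - 1)"
definition lhd :: "nat \<Rightarrow> nat" where "lhd c = pfst (c - 1)"

lemma prod_decode_0: "prod_decode 0 = (0,0)"
  unfolding prod_decode_def by (subst prod_decode_aux.simps) simp

lemma list_decode_ltl: "list_decode (ltl c) = tl (list_decode c)"
proof (cases c)
  case 0 then show ?thesis by (simp add: ltl_def psnd_def prod_decode_0)
next
  case (Suc n) then show ?thesis by (simp add: ltl_def psnd_def split: prod.split)
qed

lemma list_decode_eq0: "list_decode x = [] \<longleftrightarrow> x = 0"
proof
  assume "list_decode x = []"
  then have "list_encode (list_decode x) = 0" by simp
  then show "x = 0" by simp
qed simp

lemma lhd_eq: "c \<noteq> 0 \<Longrightarrow> lhd c = hd (list_decode c)"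
  by (cases c) (auto simp: lhd_def pfst_def split: prod.split)

lemma ltl_pow: "list_decode ((ltl^^i) c) = drop i (list_decode c)"
  by (induction i) (auto simp: list_decode_ltl drop_Suc tl_drop)

definition lnth :: "nat \<Rightarrow> nat \<Rightarrow> nat" where "lnth c i = lhd ((ltl^^i) c)"

lemma lnth_eq: "i < length (list_decode c) \<Longrightarrow> lnth c i = list_decode c ! i"
proof -
  assume i: "i < length (list_decode c)"
  have d: "list_decode ((ltl^^i) c) = drop i (list_decode c)" by (rule ltl_pow)
  have ne: "drop i (list_decode c) \<noteq> []" using i by simp
  have "(ltl^^i) c \<noteq> 0"
  proof
    assume "(ltl^^i) c = 0"
    then have "list_decode ((ltl^^i) c) = []" by simp
    then show False using d ne by simp
  qed
  then have "lnth c i = hd (drop i (list_decode c))" unfolding lnth_def using d by (simp add: lhd_eq)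
  then show ?thesis using i by (simp add: hd_drop_conv_nth)
qed

lemma length_le_encode: "length xs \<le> list_encode xs"
proof (induction xs)
  case (Cons x xs) then show ?case using le_prod_encode_2[of "list_encode xs" x] by simp
qed simp

definition llen :: "nat \<Rightarrow> nat" where "llen c = length (list_decode c)"

lemma llen_least: "llen c = (LEAST i. i = c \<or> (ltl^^i) c = 0)"
proof -
  have z: "(ltl^^i) c = 0 \<longleftrightarrow> llen c \<le> i" for i
    using ltl_pow[of i c] list_decode_eq0[of "(ltl^^i) c"] by (auto simp: llen_def)
  have le: "llen c \<le> c" using length_le_encode[of "list_decode c"] by (simp add: llen_def)
  show ?thesis
  proof (rule sym, rule Least_equality)
    show "llen c = c \<or> (ltl ^^ llen c) c = 0" using z by simp
    fix y assume "y = c \<or> (ltl ^^ y) c = 0"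
    then show "llen c \<le> y" using z le by auto
  qed
qed

lemma rI_ltl: "recursive_fun f \<Longrightarrow> recursive_fun (\<lambda>x. ltl (f x))"
  unfolding ltl_def by (intro rI)
lemma rI_lhd: "recursive_fun f \<Longrightarrow> recursive_fun (\<lambda>x. lhd (f x))"
  unfolding lhd_def by (intro rI)

lemma rec2_ltlpow: "rec2 (\<lambda>n x. (ltl^^n) x)"
  apply (rule rec_PR[where b="\<lambda>x. x" and s="\<lambda>n r x. ltl r"])
     apply (rule rI_id)
    apply (unfold rec3_def, intro rI_ltl rI)
   apply simp_all
  done

lemma rI_ltlpow: "recursive_fun f \<Longrightarrow> recursive_fun g \<Longrightarrow> recursive_fun (\<lambda>x. (ltl^^(f x)) (g x))"
  by (rule rI_app2[OF rec2_ltlpow])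

lemma rI_lnth: "recursive_fun f \<Longrightarrow> recursive_fun g \<Longrightarrow> recursive_fun (\<lambda>x. lnth (f x) (g x))"
  unfolding lnth_def by (intro rI_lhd rI_ltlpow)

lemma rI_llen: "recursive_fun f \<Longrightarrow> recursive_fun (\<lambda>x. llen (f x))"
proof -
  assume f: "recursive_fun f"
  have "recursive_fun (\<lambda>x. LEAST i. i = f x \<or> (ltl^^i) (f x) = 0)"
    by (intro rI_bleast f rP_eq rI_ltlpow rI_pfst rI_psnd rI_comp[OF f] rI_id rI_const)
  then show ?thesis by (simp add: llen_least)
qed

lemma foldr_drop_Suc:
  "n < length l \<Longrightarrow> foldr F (drop (length l - Suc n) l) z = F (l ! (length l - Suc n)) (foldr F (drop (length l - n) l) z)"
proof -
  assume n: "n < length l"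
  have "drop (length l - Suc n) l = l ! (length l - Suc n) # drop (Suc (length l - Suc n)) l"
    using n by (simp add: Cons_nth_drop_Suc)
  moreover have "Suc (length l - Suc n) = length l - n" using n by simp
  ultimately show ?thesis by simp
qed

lemma rI_foldr:
  assumes F: "rec3 F" and W: "recursive_fun W" and z: "recursive_fun z"
  shows "recursive_fun (\<lambda>x. foldr (F x) (list_decode (W x)) (z x))"
proof -
  define R where "R n x = foldr (F x) (drop (llen (W x) - n) (list_decode (W x))) (z x)" for n x
  have R0: "R 0 x = z x" for x by (simp add: R_def llen_def)
  have RS: "R (Suc n) x = (\<lambda>n r x. if n < llen (W x) then F x (lnth (W x) (llen (W x) - Suc n)) r else r) n (R n x) x" for n x
  proof (cases "n < llen (W x)")
    case True
    then show ?thesis unfolding R_def using foldr_drop_Suc[of n "list_decode (W x)" "F x" "z x"]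
      by (simp add: llen_def lnth_eq)
  next
    case False
    then show ?thesis by (simp add: R_def)
  qed
  have s: "rec3 (\<lambda>n r x. if n < llen (W x) then F x (lnth (W x) (llen (W x) - Suc n)) r else r)"
    unfolding rec3_def
    by (intro rI rI_app3[OF F] rI_llen rI_lnth rI_comp[OF W])
  have R: "rec2 R" by (rule rec_PR[OF z s R0 RS])
  have "recursive_fun (\<lambda>x. R (llen (W x)) x)"
    by (intro rI_app2[OF R] rI_llen W rI_id)
  then show ?thesis by (simp add: R_def)
qed

lemma rP_lall:
  assumes f: "recursive_fun f" and P: "recP (\<lambda>p. P (pfst p) (psnd p))"
  shows "recP (\<lambda>x. \<forall>v\<in>set (list_decode (f x)). P v x)"
proof -
  have "recP (\<lambda>x. \<forall>i<llen (f x). P (lnth (f x) i) x)"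
    by (intro rP_ball rI_llen f rP_app2[OF P] rI_lnth rI_comp[OF f] rI)
  then show ?thesis by (simp add: all_set_conv_all_nth llen_def lnth_eq)
qed

lemmas rI2 = rI rI_ltl rI_lhd rI_lnth rI_llen rP_lall


lemma div2_least: "(a::nat) div 2 = (LEAST q. q = a \<or> a < 2*q+2)"
  by (rule sym, rule Least_equality) auto

lemma rI_div2: "recursive_fun f \<Longrightarrow> recursive_fun (\<lambda>x. f x div 2)"
proof -
  assume f: "recursive_fun f"
  have "recursive_fun (\<lambda>x. LEAST q. q = f x \<or> f x < 2*q+2)"
    by (intro rI_bleast f rP_less rI_comp[OF f] rI)
  then show ?thesis by (simp add: div2_least)
qed

section \<open>Code-level tables\<close>

definition tent :: "nat \<Rightarrow> nat \<Rightarrow> nat \<Rightarrow> nat" where "tent T a b = lnth (lnth T a) b"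
definition tident :: "nat \<Rightarrow> nat \<Rightarrow> bool" where
  "tident T e \<longleftrightarrow> (\<forall>a<llen T. tent T e a = a \<and> tent T a e = a)"
definition tone :: "nat \<Rightarrow> nat" where "tone T = (LEAST e. e = llen T \<or> tident T e)"
definition tinv :: "nat \<Rightarrow> nat \<Rightarrow> nat" where "tinv T a = (LEAST b. b = llen T \<or> tent T a b = tone T)"
definition tlet :: "nat \<Rightarrow> nat \<Rightarrow> nat \<Rightarrow> nat" where
  "tlet T F a = (if a = 2 * (a div 2) then lnth F (a div 2) else tinv T (lnth F (a div 2)))"
definition teval :: "nat \<Rightarrow> nat \<Rightarrow> nat \<Rightarrow> nat" where
  "teval T F W = foldr (\<lambda>a acc. tent T (tlet T F a) acc) (list_decode W) (tone T)"
definition trows :: "nat \<Rightarrow> bool" where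
  "trows T \<longleftrightarrow> (\<forall>a<llen T. llen (lnth T a) = llen T \<and> (\<forall>b<llen T. tent T a b < llen T))"
definition tvalid :: "nat \<Rightarrow> bool" where
  "tvalid T \<longleftrightarrow> trows T \<and> (\<exists>e<llen T. tident T e)
     \<and> (\<forall>a<llen T. \<forall>b<llen T. \<forall>c<llen T. tent T (tent T a b) c = tent T a (tent T b c))
     \<and> (\<forall>e<llen T. tident T e \<longrightarrow> (\<forall>a<llen T. \<exists>b<llen T. tent T a b = e \<and> tent T b a = e))"

lemma rI_tent: "recursive_fun f \<Longrightarrow> recursive_fun g \<Longrightarrow> recursive_fun h \<Longrightarrow> recursive_fun (\<lambda>x. tent (f x) (g x) (h x))"
  unfolding tent_def by (intro rI_lnth)

lemma rP_tident: "recursive_fun f \<Longrightarrow> recursive_fun g \<Longrightarrow> recP (\<lambda>x. tident (f x) (g x))"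
proof -
  assume f: "recursive_fun f" and g: "recursive_fun g"
  show ?thesis unfolding tident_def
    by (intro rP_ball rI_llen f rP_conj rP_eq rI_tent rI_comp[OF f] rI_comp[OF g] rI)
qed

lemma rI_tone: "recursive_fun f \<Longrightarrow> recursive_fun (\<lambda>x. tone (f x))"
proof -
  assume f: "recursive_fun f"
  show ?thesis unfolding tone_def
    by (intro rI_bleast rI_llen f rP_tident rI_comp[OF f] rI)
qed

lemma rI_tinv: "recursive_fun f \<Longrightarrow> recursive_fun g \<Longrightarrow> recursive_fun (\<lambda>x. tinv (f x) (g x))"
proof -
  assume f: "recursive_fun f" and g: "recursive_fun g"
  show ?thesis unfolding tinv_def
    by (intro rI_bleast rI_llen f rP_eq rI_tent rI_tone rI_comp[OF f] rI_comp[OF g] rI)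
qed

lemma rI_tlet: "recursive_fun f \<Longrightarrow> recursive_fun g \<Longrightarrow> recursive_fun h \<Longrightarrow> recursive_fun (\<lambda>x. tlet (f x) (g x) (h x))"
proof -
  assume f: "recursive_fun f" and g: "recursive_fun g" and h: "recursive_fun h"
  show ?thesis unfolding tlet_def
    by (intro rI_if rP_eq h rI_mult rI_div2 rI_lnth g rI_tinv f rI)
qed

lemma rec3_teval: "rec3 teval"
proof -
  have F: "rec3 (\<lambda>q a acc. tent (pfst q) (tlet (pfst q) (pfst (psnd q)) a) acc)"
    unfolding rec3_def by (intro rI_tent rI_tlet rI)
  have W: "recursive_fun (\<lambda>q. psnd (psnd q))" by (intro rI)
  have z: "recursive_fun (\<lambda>q. tone (pfst q))" by (intro rI_tone rI)
  from rI_foldr[OF F W z] show ?thesis unfolding rec3_def teval_def by simp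
qed

lemma rI_teval: "recursive_fun f \<Longrightarrow> recursive_fun g \<Longrightarrow> recursive_fun h \<Longrightarrow> recursive_fun (\<lambda>x. teval (f x) (g x) (h x))"
  by (rule rI_app3[OF rec3_teval])

lemma rP_trows: "recursive_fun f \<Longrightarrow> recP (\<lambda>x. trows (f x))"
proof -
  assume f: "recursive_fun f"
  show ?thesis unfolding trows_def
    by (intro rP_ball rI_llen f rP_conj rP_eq rP_less rI_tent rI_lnth rI_comp[OF f] rI)
qed

lemma rP_tvalid: "recursive_fun f \<Longrightarrow> recP (\<lambda>x. tvalid (f x))"
proof -
  assume f: "recursive_fun f"
  show ?thesis unfolding tvalid_def
    by (intro rP_conj rP_trows f rP_bex rP_ball rI_llen rP_tident rP_imp rP_eq rI_tent rI_comp[OF f] rI)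
qed

fun Ebd :: "nat \<Rightarrow> nat \<Rightarrow> nat" where
  "Ebd 0 b = 0"
| "Ebd (Suc l) b = Suc (prod_encode (b, Ebd l b))"

lemma rec2_Ebd: "rec2 Ebd"
  apply (rule rec_PR[where b="\<lambda>x. 0" and s="\<lambda>n r x. Suc (prod_encode (x, r))"])
     apply (rule rI_const)
    apply (unfold rec3_def, intro rI)
   apply simp_all
  done

lemma rI_Ebd: "recursive_fun f \<Longrightarrow> recursive_fun g \<Longrightarrow> recursive_fun (\<lambda>x. Ebd (f x) (g x))"
  by (rule rI_app2[OF rec2_Ebd])

lemma prod_encode_mono: "a \<le> a' \<Longrightarrow> b \<le> b' \<Longrightarrow> prod_encode (a,b) \<le> prod_encode (a',b')"
  unfolding prod_encode_def using triangle_mono[of "a+b" "a'+b'"] by simp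

lemma Ebd_mono: "l \<le> l' \<Longrightarrow> Ebd l b \<le> Ebd l' b"
proof (induction l' arbitrary: l)
  case 0 then show ?case by simp
next
  case (Suc l')
  have "Ebd l' b \<le> Ebd (Suc l') b" using le_prod_encode_2[of "Ebd l' b" b] by simp
  from Suc.prems have "l \<le> l' \<or> l = Suc l'" by auto
  then show ?case
  proof
    assume "l \<le> l'"
    then show ?thesis using Suc.IH \<open>Ebd l' b \<le> Ebd (Suc l') b\<close> by (meson order_trans)
  qed simp
qed

lemma list_encode_bound: "length xs \<le> l \<Longrightarrow> \<forall>x\<in>set xs. x \<le> b \<Longrightarrow> list_encode xs \<le> Ebd l b"
proof (induction xs arbitrary: l)
  case Nil then show ?case by simp
next
  case (Cons x xs)
  then obtain l' where l: "l = Suc l'" by (cases l) auto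
  have "list_encode xs \<le> Ebd l' b" using Cons l by simp
  then have "prod_encode (x, list_encode xs) \<le> prod_encode (b, Ebd l' b)"
    using Cons by (intro prod_encode_mono) auto
  then show ?case using l by simp
qed


lemma tg_carrier[simp]: "carrier (table_group t) = {..<length t}"
  by (simp add: table_group_def)
lemma tg_mult[simp]: "x \<otimes>\<^bsub>table_group t\<^esub> y = t ! x ! y"
  by (simp add: table_group_def)
lemma tg_one_def: "\<one>\<^bsub>table_group t\<^esub> = (SOME e. e < length t \<and> (\<forall>a<length t. t ! e ! a = a \<and> t ! a ! e = a))"
  by (simp add: table_group_def)

definition rowsok :: "nat list list \<Rightarrow> bool" where
  "rowsok t \<longleftrightarrow> (\<forall>r\<in>set t. length r = length t \<and> (\<forall>x\<in>set r. x < length t))"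
definition ident :: "nat list list \<Rightarrow> nat \<Rightarrow> bool" where
  "ident t e \<longleftrightarrow> (\<forall>a<length t. t ! e ! a = a \<and> t ! a ! e = a)"
definition tassoc :: "nat list list \<Rightarrow> bool" where
  "tassoc t \<longleftrightarrow> (\<forall>a<length t. \<forall>b<length t. \<forall>c<length t. t ! (t ! a ! b) ! c = t ! a ! (t ! b ! c))"
definition tinvs :: "nat list list \<Rightarrow> bool" where
  "tinvs t \<longleftrightarrow> (\<forall>e<length t. ident t e \<longrightarrow> (\<forall>a<length t. \<exists>b<length t. t ! a ! b = e \<and> t ! b ! a = e))"

lemma valid_table_group: "valid_table t \<Longrightarrow> group (table_group t)"
  by (simp add: valid_table_def)

lemma valid_table_rowsok: "valid_table t \<Longrightarrow> rowsok t"
  by (simp add: valid_table_def rowsok_def)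

lemma valid_ident_one:
  assumes v: "valid_table t" and e: "e < length t" "ident t e"
  shows "\<one>\<^bsub>table_group t\<^esub> = e"
proof -
  interpret group "table_group t" by (rule valid_table_group[OF v])
  let ?o = "\<one>\<^bsub>table_group t\<^esub>"
  have o: "?o < length t" using one_closed by simp
  have "t ! e ! ?o = ?o" using e o by (simp add: ident_def)
  moreover have "t ! e ! ?o = e" using r_one[of e] e by simp
  ultimately show ?thesis by simp
qed

lemma valid_one_ident:
  assumes v: "valid_table t"
  shows "\<one>\<^bsub>table_group t\<^esub> < length t \<and> ident t \<one>\<^bsub>table_group t\<^esub>"
proof -
  interpret group "table_group t" by (rule valid_table_group[OF v])
  show ?thesis using one_closed l_one r_one by (auto simp: ident_def)
qed

lemma valid_table_iff:
  "valid_table t \<longleftrightarrow> rowsok t \<and> (\<exists>e<length t. ident t e) \<and> tassoc t \<and> tinvs t"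
proof
  assume v: "valid_table t"
  interpret group "table_group t" by (rule valid_table_group[OF v])
  have r: "rowsok t" by (rule valid_table_rowsok[OF v])
  have i: "\<exists>e<length t. ident t e" using valid_one_ident[OF v] by blast
  have a: "tassoc t" unfolding tassoc_def using m_assoc by simp
  have iv: "tinvs t" unfolding tinvs_def
  proof (intro allI impI)
    fix e a assume e: "e < length t" "ident t e" and a: "a < length t"
    have eo: "\<one>\<^bsub>table_group t\<^esub> = e" by (rule valid_ident_one[OF v e])
    have "inv\<^bsub>table_group t\<^esub> a < length t" using a inv_closed[of a] by simp
    moreover have "t ! a ! (inv\<^bsub>table_group t\<^esub> a) = e" "t ! (inv\<^bsub>table_group t\<^esub> a) ! a = e"
      using r_inv[of a] l_inv[of a] a eo by simp_all
    ultimately show "\<exists>b<length t. t ! a ! b = e \<and> t ! b ! a = e" by blast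
  qed
  show "rowsok t \<and> (\<exists>e<length t. ident t e) \<and> tassoc t \<and> tinvs t" using r i a iv by blast
next
  assume h: "rowsok t \<and> (\<exists>e<length t. ident t e) \<and> tassoc t \<and> tinvs t"
  then have r: "rowsok t" and ex: "\<exists>e. e < length t \<and> ident t e" and a: "tassoc t" and iv: "tinvs t" by auto
  let ?o = "\<one>\<^bsub>table_group t\<^esub>"
  have o: "?o < length t \<and> ident t ?o"
    unfolding tg_one_def ident_def[symmetric] by (rule someI_ex[OF ex])
  have g: "group (table_group t)"
  proof (rule groupI)
    fix x y assume "x \<in> carrier (table_group t)" "y \<in> carrier (table_group t)"
    then have x: "x < length t" and y: "y < length t" by auto
    have "t ! x \<in> set t" using x by simp
    then show "x \<otimes>\<^bsub>table_group t\<^esub> y \<in> carrier (table_group t)"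
      using r y unfolding rowsok_def by auto
  next
    show "?o \<in> carrier (table_group t)" using o by simp
  next
    fix x y z assume "x \<in> carrier (table_group t)" "y \<in> carrier (table_group t)" "z \<in> carrier (table_group t)"
    then show "x \<otimes>\<^bsub>table_group t\<^esub> y \<otimes>\<^bsub>table_group t\<^esub> z = x \<otimes>\<^bsub>table_group t\<^esub> (y \<otimes>\<^bsub>table_group t\<^esub> z)"
      using a unfolding tassoc_def by simp
  next
    fix x assume "x \<in> carrier (table_group t)"
    then show "?o \<otimes>\<^bsub>table_group t\<^esub> x = x" using o by (simp add: ident_def)
  next
    fix x assume "x \<in> carrier (table_group t)"
    then have x: "x < length t" by simp
    then obtain b where "b < length t" "t ! x ! b = ?o" "t ! b ! x = ?o"
      using iv o unfolding tinvs_def by blast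
    then show "\<exists>y\<in>carrier (table_group t). y \<otimes>\<^bsub>table_group t\<^esub> x = ?o" by auto
  qed
  show "valid_table t" using g r unfolding valid_table_def rowsok_def by blast
qed

definition tab :: "nat \<Rightarrow> nat list list" where "tab T = map list_decode (list_decode T)"

lemma length_tab[simp]: "length (tab T) = llen T"
  by (simp add: tab_def llen_def)

lemma tab_nth: "a < llen T \<Longrightarrow> tab T ! a = list_decode (lnth T a)"
  by (simp add: tab_def llen_def lnth_eq)

lemma tab_encode: "tab (list_encode (map list_encode t)) = t"
  by (simp add: tab_def comp_def)

lemma trows_iff: "trows T \<longleftrightarrow> rowsok (tab T)"
proof -
  have "rowsok (tab T) \<longleftrightarrow> (\<forall>a<llen T. length (tab T ! a) = llen T \<and> (\<forall>b<length (tab T ! a). tab T ! a ! b < llen T))"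
    unfolding rowsok_def all_set_conv_all_nth by simp
  also have "\<dots> \<longleftrightarrow> (\<forall>a<llen T. llen (lnth T a) = llen T \<and> (\<forall>b<llen (lnth T a). lnth (lnth T a) b < llen T))"
    by (auto simp: tab_nth llen_def lnth_eq)
  also have "\<dots> \<longleftrightarrow> trows T"
    unfolding trows_def tent_def by auto
  finally show ?thesis by simp
qed

lemma tent_tab: "trows T \<Longrightarrow> a < llen T \<Longrightarrow> b < llen T \<Longrightarrow> tent T a b = tab T ! a ! b"
  unfolding trows_def tent_def by (simp add: tab_nth lnth_eq llen_def)

lemma tident_iff: "trows T \<Longrightarrow> e < llen T \<Longrightarrow> tident T e \<longleftrightarrow> ident (tab T) e"
  unfolding tident_def ident_def by (auto simp: tent_tab)

lemma tvalid_iff: "tvalid T \<longleftrightarrow> valid_table (tab T)"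
proof (cases "trows T")
  case False
  then show ?thesis unfolding tvalid_def valid_table_iff trows_iff by simp
next
  case True
  have rows_in: "tent T a b < llen T" if "a < llen T" "b < llen T" for a b
    using True that unfolding trows_def by blast
  have A: "(\<exists>e<llen T. tident T e) \<longleftrightarrow> (\<exists>e<length (tab T). ident (tab T) e)"
    using tident_iff[OF True] by auto
  have B: "(\<forall>a<llen T. \<forall>b<llen T. \<forall>c<llen T. tent T (tent T a b) c = tent T a (tent T b c)) \<longleftrightarrow> tassoc (tab T)"
    unfolding tassoc_def using rows_in by (auto simp: tent_tab[OF True])
  have C: "(\<forall>e<llen T. tident T e \<longrightarrow> (\<forall>a<llen T. \<exists>b<llen T. tent T a b = e \<and> tent T b a = e)) \<longleftrightarrow> tinvs (tab T)"
  proof -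
    have "(\<exists>b<llen T. tent T a b = e \<and> tent T b a = e) \<longleftrightarrow> (\<exists>b<llen T. tab T ! a ! b = e \<and> tab T ! b ! a = e)"
      if "a < llen T" for a e
    proof -
      have "\<And>b. b < llen T \<Longrightarrow> tent T a b = tab T ! a ! b \<and> tent T b a = tab T ! b ! a"
        using tent_tab[OF True] that by blast
      then show ?thesis by metis
    qed
    then show ?thesis unfolding tinvs_def using tident_iff[OF True] by (simp cong: imp_cong)
  qed
  show ?thesis unfolding tvalid_def valid_table_iff trows_iff[symmetric] using True A B C by simp
qed

lemma tone_eq:
  assumes v: "valid_table (tab T)"
  shows "tone T = \<one>\<^bsub>table_group (tab T)\<^esub>"
proof -
  let ?o = "\<one>\<^bsub>table_group (tab T)\<^esub>"
  have r: "trows T" using valid_table_rowsok[OF v] trows_iff by simp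
  have o: "?o < llen T" "ident (tab T) ?o" using valid_one_ident[OF v] by auto
  show ?thesis unfolding tone_def
  proof (rule Least_equality)
    show "?o = llen T \<or> tident T ?o" using o tident_iff[OF r] by simp
    fix y assume "y = llen T \<or> tident T y"
    then show "?o \<le> y"
    proof
      assume "tident T y"
      show "?o \<le> y"
      proof (cases "y < llen T")
        case True
        then have "ident (tab T) y" using \<open>tident T y\<close> tident_iff[OF r] by simp
        then show ?thesis using valid_ident_one[OF v] True by simp
      qed (use o in simp)
    qed (use o in simp)
  qed
qed

lemma tinv_eq:
  assumes v: "valid_table (tab T)" and a: "a < llen T"
  shows "tinv T a = inv\<^bsub>table_group (tab T)\<^esub> a"
proof -
  interpret group "table_group (tab T)" by (rule valid_table_group[OF v])
  let ?H = "table_group (tab T)"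
  have r: "trows T" using valid_table_rowsok[OF v] trows_iff by simp
  have ac: "a \<in> carrier ?H" using a by simp
  have ic: "inv\<^bsub>?H\<^esub> a < llen T" using inv_closed[OF ac] by simp
  show ?thesis unfolding tinv_def
  proof (rule Least_equality)
    show "inv\<^bsub>?H\<^esub> a = llen T \<or> tent T a (inv\<^bsub>?H\<^esub> a) = tone T"
      using r_inv[OF ac] tent_tab[OF r a ic] tone_eq[OF v] by simp
    fix y assume "y = llen T \<or> tent T a y = tone T"
    then show "inv\<^bsub>?H\<^esub> a \<le> y"
    proof
      assume y: "tent T a y = tone T"
      show ?thesis
      proof (cases "y < llen T")
        case True
        then have "a \<otimes>\<^bsub>?H\<^esub> y = \<one>\<^bsub>?H\<^esub>" using y tent_tab[OF r a True] tone_eq[OF v] by simp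
        moreover have yc: "y \<in> carrier ?H" using True by simp
        ultimately have "inv\<^bsub>?H\<^esub> a \<otimes>\<^bsub>?H\<^esub> (a \<otimes>\<^bsub>?H\<^esub> y) = inv\<^bsub>?H\<^esub> a" using r_one[OF inv_closed[OF ac]] by simp
        moreover have "inv\<^bsub>?H\<^esub> a \<otimes>\<^bsub>?H\<^esub> (a \<otimes>\<^bsub>?H\<^esub> y) = y"
          using m_assoc[of "inv\<^bsub>?H\<^esub> a" a y, OF inv_closed[OF ac] ac yc] l_inv[OF ac] l_one[OF yc] by simp
        ultimately have "y = inv\<^bsub>?H\<^esub> a" by simp
        then show ?thesis by simp
      qed (use ic in simp)
    qed (use ic in simp)
  qed
qed


lemma letter_val_closed:
  assumes "group G" "set ss \<subseteq> carrier G" "a < 2 * length ss"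
  shows "letter_val G ss a \<in> carrier G"
proof -
  have "a div 2 < length ss" using assms(3) by simp
  then have "ss ! (a div 2) \<in> carrier G" using assms(2) nth_mem by blast
  then show ?thesis unfolding letter_val_def using group.inv_closed[OF assms(1)] by simp
qed

lemma word_eval_Nil[simp]: "word_eval G ss [] = \<one>\<^bsub>G\<^esub>"
  by (simp add: word_eval_def)
lemma word_eval_Cons[simp]: "word_eval G ss (a # w) = letter_val G ss a \<otimes>\<^bsub>G\<^esub> word_eval G ss w"
  by (simp add: word_eval_def)

lemma valid_word_Cons[simp]: "valid_word ss (a # w) \<longleftrightarrow> a < 2 * length ss \<and> valid_word ss w"
  by (simp add: valid_word_def)
lemma valid_word_Nil[simp]: "valid_word ss []"
  by (simp add: valid_word_def)
lemma valid_word_append[simp]: "valid_word ss (u @ v) \<longleftrightarrow> valid_word ss u \<and> valid_word ss v"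
  by (auto simp add: valid_word_def)

lemma word_eval_closed:
  assumes "group G" "set ss \<subseteq> carrier G" "valid_word ss w"
  shows "word_eval G ss w \<in> carrier G"
  using assms(3)
proof (induction w)
  case Nil then show ?case using group.is_monoid[OF assms(1)] monoid.one_closed by fastforce
next
  case (Cons a w)
  then show ?case using letter_val_closed[OF assms(1,2)] group.is_monoid[OF assms(1)] monoid.m_closed by fastforce
qed

lemma word_eval_append:
  assumes G: "group G" and ss: "set ss \<subseteq> carrier G" and u: "valid_word ss u" and v: "valid_word ss v"
  shows "word_eval G ss (u @ v) = word_eval G ss u \<otimes>\<^bsub>G\<^esub> word_eval G ss v"
  using u
proof (induction u)
  case Nil
  then show ?case using word_eval_closed[OF G ss v] group.is_monoid[OF G] monoid.l_one by fastforce
next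
  case (Cons a u)
  then have a: "letter_val G ss a \<in> carrier G" and u': "valid_word ss u" using letter_val_closed[OF G ss] by auto
  show ?case using Cons.IH[OF u'] monoid.m_assoc[OF group.is_monoid[OF G] a word_eval_closed[OF G ss u'] word_eval_closed[OF G ss v]]
    by simp
qed

lemma even_iff_div2: "even (a::nat) \<longleftrightarrow> a = 2 * (a div 2)"
  by presburger

lemma teval_eq:
  assumes G: "group G" and ss: "set ss \<subseteq> carrier G" and v: "valid_table (tab T)"
    and psi: "\<psi> \<in> hom G (table_group (tab T))"
    and Fl: "length (list_decode Fc) = length ss" and Fi: "\<forall>i<length ss. \<psi> (ss ! i) = list_decode Fc ! i"
    and w: "valid_word ss w"
  shows "\<psi> (word_eval G ss w) = teval T Fc (list_encode w)"
proof -
  let ?H = "table_group (tab T)"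
  have gh: "group_hom G ?H \<psi>"
    using G valid_table_group[OF v] psi by (simp add: group_hom_def group_hom_axioms_def)
  have r: "trows T" using valid_table_rowsok[OF v] trows_iff by simp
  have "\<psi> (word_eval G ss w) = foldr (\<lambda>a acc. tent T (tlet T Fc a) acc) w (tone T)"
    using w
  proof (induction w)
    case Nil
    then show ?case using group_hom.hom_one[OF gh] tone_eq[OF v] by simp
  next
    case (Cons a w)
    then have a: "a < 2 * length ss" and w': "valid_word ss w" by auto
    let ?i = "a div 2"
    have i: "?i < length ss" using a by simp
    have si: "ss ! ?i \<in> carrier G" using i ss nth_mem by blast
    have lv: "letter_val G ss a \<in> carrier G" by (rule letter_val_closed[OF G ss a])
    have we: "word_eval G ss w \<in> carrier G" by (rule word_eval_closed[OF G ss w'])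
    have X: "\<psi> (word_eval G ss w) < llen T"
      using group_hom.hom_closed[OF gh we] by simp
    have lnthF: "lnth Fc ?i = \<psi> (ss ! ?i)" using Fi Fl i by (simp add: lnth_eq)
    have psi_si: "\<psi> (ss ! ?i) < llen T" using group_hom.hom_closed[OF gh si] by simp
    have tl: "tlet T Fc a = \<psi> (letter_val G ss a)"
    proof (cases "even a")
      case True
      then have e2: "a = 2 * ?i" using even_iff_div2[of a] by blast
      have "tlet T Fc a = lnth Fc ?i" unfolding tlet_def using e2 by (simp only: if_P)
      moreover have "letter_val G ss a = ss ! ?i" unfolding letter_val_def using True by (simp only: if_P)
      ultimately show ?thesis using lnthF by simp
    next
      case False
      then have e2: "\<not> a = 2 * ?i" using even_iff_div2[of a] by blast
      have "tlet T Fc a = tinv T (lnth Fc ?i)" unfolding tlet_def using e2 by (simp only: if_not_P if_False)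
      moreover have "letter_val G ss a = inv\<^bsub>G\<^esub> (ss ! ?i)" unfolding letter_val_def using False by (simp only: if_not_P if_False)
      ultimately show ?thesis using lnthF tinv_eq[OF v psi_si] group_hom.hom_inv[OF gh si] by simp
    qed
    have PL: "\<psi> (letter_val G ss a) < llen T" using group_hom.hom_closed[OF gh lv] by simp
    have "\<psi> (word_eval G ss (a # w)) = \<psi> (letter_val G ss a) \<otimes>\<^bsub>?H\<^esub> \<psi> (word_eval G ss w)"
      using hom_mult[OF psi lv we] by simp
    also have "\<dots> = tent T (tlet T Fc a) (\<psi> (word_eval G ss w))"
      using tent_tab[OF r PL X] tl by simp
    finally show ?case using Cons.IH[OF w'] by simp
  qed
  then show ?thesis unfolding teval_def by simp
qed

section \<open>From homomorphisms to finite quotients\<close>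

lemma kernel_detect:
  assumes G: "group G" and v: "valid_table t" and psi: "\<psi> \<in> hom G (table_group t)"
    and g: "g \<in> carrier G" and ng: "\<psi> g \<noteq> \<one>\<^bsub>table_group t\<^esub>"
  shows "\<exists>N. finite_quot_detects G N g \<and> card (rcosets\<^bsub>G\<^esub> N) \<le> length t"
proof -
  let ?H = "table_group t"
  have gh: "group_hom G ?H \<psi>"
    using G valid_table_group[OF v] psi by (simp add: group_hom_def group_hom_axioms_def)
  let ?N = "kernel G ?H \<psi>"
  have nN: "?N \<lhd> G" by (rule group_hom.normal_kernel[OF gh])
  have car: "carrier (G Mod ?N) = rcosets\<^bsub>G\<^esub> ?N" by (simp add: FactGroup_def)
  define FE where "FE = (\<lambda>Y. the_elem (image \<psi> Y))"
  have inj: "inj_on FE (rcosets\<^bsub>G\<^esub> ?N)"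
    using group_hom.FactGroup_inj_on[OF gh] car unfolding FE_def by simp
  have into: "FE ` (rcosets\<^bsub>G\<^esub> ?N) \<subseteq> {..<length t}"
    using group_hom.FactGroup_the_elem_mem[OF gh] car unfolding FE_def by auto
  have fin: "finite (rcosets\<^bsub>G\<^esub> ?N)"
    using inj into finite_subset[OF into] finite_image_iff[OF inj] by blast
  have "card (rcosets\<^bsub>G\<^esub> ?N) \<le> card {..<length t}"
    using card_inj_on_le[OF inj _ ] into by (meson card_inj_on_le finite_lessThan image_subset_iff_funcset)
  then have cd: "card (rcosets\<^bsub>G\<^esub> ?N) \<le> length t" by simp
  have "g \<notin> ?N" using ng by (simp add: kernel_def)
  then show ?thesis using nN fin cd unfolding finite_quot_detects_def by blast
qed

section \<open>From finite quotients to tables\<close>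

declare mult_FactGroup[simp del] one_FactGroup[simp del]

lemma quotient_table:
  assumes G: "group G" and nN: "N \<lhd> G" and fin: "finite (rcosets\<^bsub>G\<^esub> N)"
    and g: "g \<in> carrier G" and gN: "g \<notin> N"
  shows "\<exists>t \<psi>. valid_table t \<and> \<psi> \<in> hom G (table_group t) \<and> \<psi> g \<noteq> \<one>\<^bsub>table_group t\<^esub>
            \<and> length t = card (rcosets\<^bsub>G\<^esub> N)"
proof -
  let ?Q = "G Mod N"
  interpret Q: group ?Q by (rule normal.factorgroup_is_group[OF nN])
  interpret N: normal N G by (rule nN)
  have carQ: "carrier ?Q = rcosets\<^bsub>G\<^esub> N" by (simp add: FactGroup_def)
  define m where "m = card (rcosets\<^bsub>G\<^esub> N)"
  obtain h where h: "bij_betw h {0..<m} (carrier ?Q)"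
    using ex_bij_betw_nat_finite[OF fin] carQ m_def by auto
  define idx where "idx = inv_into {0..<m} h"
  have hC: "i < m \<Longrightarrow> h i \<in> carrier ?Q" for i using h by (auto simp: bij_betw_def)
  have idxm: "c \<in> carrier ?Q \<Longrightarrow> idx c < m" for c
    using h unfolding idx_def by (metis atLeastLessThan_iff bij_betw_def inv_into_into)
  have hidx: "c \<in> carrier ?Q \<Longrightarrow> h (idx c) = c" for c
    using h unfolding idx_def by (simp add: bij_betw_def f_inv_into_f)
  have idxh: "i < m \<Longrightarrow> idx (h i) = i" for i
    using h unfolding idx_def by (simp add: bij_betw_def inv_into_f_f)
  define t where "t = map (\<lambda>i. map (\<lambda>j. idx (h i \<otimes>\<^bsub>?Q\<^esub> h j)) [0..<m]) [0..<m]"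
  have lt: "length t = m" by (simp add: t_def)
  have tij: "i < m \<Longrightarrow> j < m \<Longrightarrow> t ! i ! j = idx (h i \<otimes>\<^bsub>?Q\<^esub> h j)" for i j by (simp add: t_def)
  define e0 where "e0 = idx \<one>\<^bsub>?Q\<^esub>"
  have e0m: "e0 < m" unfolding e0_def by (rule idxm[OF Q.one_closed])
  have he0: "h e0 = \<one>\<^bsub>?Q\<^esub>" unfolding e0_def by (rule hidx[OF Q.one_closed])
  have ide0: "ident t e0" unfolding ident_def lt
  proof (intro allI impI conjI)
    fix a assume a: "a < m"
    show "t ! e0 ! a = a" using tij[OF e0m a] he0 Q.l_one[OF hC[OF a]] idxh[OF a] by simp
    show "t ! a ! e0 = a" using tij[OF a e0m] he0 Q.r_one[OF hC[OF a]] idxh[OF a] by simp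
  qed
  have mc: "i < m \<Longrightarrow> j < m \<Longrightarrow> h i \<otimes>\<^bsub>?Q\<^esub> h j \<in> carrier ?Q" for i j
    using Q.m_closed[OF hC hC] by simp
  have rows: "rowsok t" unfolding rowsok_def lt
    by (auto simp: t_def intro!: idxm mc)
  have ass: "tassoc t" unfolding tassoc_def lt
  proof (intro allI impI)
    fix a b c assume a: "a < m" and b: "b < m" and c: "c < m"
    have ab: "t ! a ! b < m" "t ! b ! c < m" using tij a b c idxm mc by auto
    show "t ! (t ! a ! b) ! c = t ! a ! (t ! b ! c)"
      using tij[OF ab(1) c] tij[OF a ab(2)] tij[OF a b] tij[OF b c] hidx hC a b c
        Q.m_assoc[OF hC[OF a] hC[OF b] hC[OF c]] by simp
  qed
  have invs: "tinvs t" unfolding tinvs_def lt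
  proof (intro allI impI)
    fix e a assume e: "e < m" "ident t e" and a: "a < m"
    have "t ! e ! e0 = e0" using e(2) e0m lt unfolding ident_def by blast
    moreover have "t ! e ! e0 = e" using ide0 e(1) lt unfolding ident_def by blast
    ultimately have ee: "e = e0" by simp
    define b where "b = idx (inv\<^bsub>?Q\<^esub> (h a))"
    have bm: "b < m" unfolding b_def using hC[OF a] by (intro idxm) simp
    have hb: "h b = inv\<^bsub>?Q\<^esub> (h a)" unfolding b_def using hC[OF a] by (intro hidx) simp
    have "t ! a ! b = e0" "t ! b ! a = e0"
      using tij[OF a bm] tij[OF bm a] hb hC[OF a] e0_def by simp_all
    then show "\<exists>b<m. t ! a ! b = e \<and> t ! b ! a = e" using bm ee by blast
  qed
  have v: "valid_table t" unfolding valid_table_iff using rows ide0 e0m lt ass invs by blast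
  have one: "\<one>\<^bsub>table_group t\<^esub> = e0" using valid_ident_one[OF v] e0m lt ide0 by simp
  define \<psi> where "\<psi> x = idx (N #>\<^bsub>G\<^esub> x)" for x
  have rc: "x \<in> carrier G \<Longrightarrow> N #>\<^bsub>G\<^esub> x \<in> carrier ?Q" for x
    using carQ N.rcosetsI N.subset by simp
  have hom: "\<psi> \<in> hom G (table_group t)"
  proof (rule homI)
    fix x assume "x \<in> carrier G"
    then show "\<psi> x \<in> carrier (table_group t)" unfolding \<psi>_def using idxm rc lt by simp
  next
    fix x y assume x: "x \<in> carrier G" and y: "y \<in> carrier G"
    have px: "\<psi> x < m" "\<psi> y < m" unfolding \<psi>_def using idxm rc x y by auto
    have "\<psi> (x \<otimes>\<^bsub>G\<^esub> y) = idx ((N #>\<^bsub>G\<^esub> x) \<otimes>\<^bsub>?Q\<^esub> (N #>\<^bsub>G\<^esub> y))"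
      unfolding \<psi>_def using N.rcos_sum[OF x y] by (simp add: mult_FactGroup)
    also have "\<dots> = idx (h (\<psi> x) \<otimes>\<^bsub>?Q\<^esub> h (\<psi> y))"
      unfolding \<psi>_def using hidx rc x y by simp
    also have "\<dots> = t ! \<psi> x ! \<psi> y" using tij px by simp
    finally show "\<psi> (x \<otimes>\<^bsub>G\<^esub> y) = \<psi> x \<otimes>\<^bsub>table_group t\<^esub> \<psi> y" by simp
  qed
  have ne: "\<psi> g \<noteq> e0"
  proof
    assume "\<psi> g = e0"
    then have "h (\<psi> g) = h e0" by simp
    then have "N #>\<^bsub>G\<^esub> g = N" unfolding \<psi>_def using hidx rc[OF g] he0 by (simp add: one_FactGroup)
    moreover have "g \<in> N #>\<^bsub>G\<^esub> g" using N.rcos_self[OF g] N.subgroup_axioms by simp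
    ultimately show False using gN by simp
  qed
  show ?thesis using v hom ne one lt m_def by metis
qed

declare mult_FactGroup[simp] one_FactGroup[simp]


section \<open>Translation between generating lists\<close>

lemma generate_words:
  assumes G: "group G" and ss: "set ss \<subseteq> carrier G" and x: "x \<in> generate G (set ss)"
  shows "\<exists>u. valid_word ss u \<and> word_eval G ss u = x"
  using x
proof (induction rule: generate.induct)
  case one
  then show ?case by (intro exI[of _ "[]"]) simp
next
  case (incl h)
  then obtain i where i: "i < length ss" "ss ! i = h" by (auto simp: in_set_conv_nth)
  have hc: "h \<in> carrier G" using incl ss by blast
  have "letter_val G ss (2*i) = h" unfolding letter_val_def using i by simp
  then show ?case using i hc group.is_monoid[OF G] monoid.r_one
    by (intro exI[of _ "[2*i]"]) fastforce
next
  case (inv h)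
  then obtain i where i: "i < length ss" "ss ! i = h" by (auto simp: in_set_conv_nth)
  have hc: "inv\<^bsub>G\<^esub> h \<in> carrier G" using inv ss group.inv_closed[OF G] by blast
  have "letter_val G ss (2*i+1) = inv\<^bsub>G\<^esub> h" unfolding letter_val_def using i by simp
  then show ?case using i hc group.is_monoid[OF G] monoid.r_one
    by (intro exI[of _ "[2*i+1]"]) fastforce
next
  case (eng h1 h2)
  then obtain u1 u2 where "valid_word ss u1" "word_eval G ss u1 = h1" "valid_word ss u2" "word_eval G ss u2 = h2"
    by blast
  then show ?case using word_eval_append[OF G ss] by (intro exI[of _ "u1 @ u2"]) simp
qed

lemma app_enc: "foldr (\<lambda>x acc. Suc (prod_encode (x, acc))) xs (list_encode ys) = list_encode (xs @ ys)"
  by (induction xs) simp_all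

lemma lnth_out: "llen c \<le> i \<Longrightarrow> lnth c i = 0"
proof -
  assume "llen c \<le> i"
  then have "list_decode ((ltl^^i) c) = []" using ltl_pow[of i c] by (simp add: llen_def)
  then have "(ltl^^i) c = 0" using list_decode_eq0 by blast
  then show ?thesis by (simp add: lnth_def lhd_def pfst_def prod_decode_0)
qed

lemma translate:
  assumes G: "group G" and g: "gen_list G ss" and g': "gen_list G ss'"
  shows "\<exists>tr C. (\<forall>w. valid_word ss w \<longrightarrow> valid_word ss' (tr w) \<and> word_eval G ss' (tr w) = word_eval G ss w
                      \<and> length (tr w) \<le> C * length w)
              \<and> recursive_fun (\<lambda>y. list_encode (tr (list_decode y)))"
proof -
  let ?L = "length ss"
  have ssc: "set ss \<subseteq> carrier G" and ss'c: "set ss' \<subseteq> carrier G" and gen': "generate G (set ss') = carrier G"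
    using g g' by (auto simp: gen_list_def)
  have ex: "\<exists>u. valid_word ss' u \<and> word_eval G ss' u = letter_val G ss a" if "a < 2 * ?L" for a
    using generate_words[OF G ss'c] letter_val_closed[OF G ssc that] gen' by blast
  define Tab where "Tab = map (\<lambda>a. SOME u. valid_word ss' u \<and> word_eval G ss' u = letter_val G ss a) [0..<2*?L]"
  have lT: "length Tab = 2 * ?L" by (simp add: Tab_def)
  have tabok: "valid_word ss' (Tab ! a) \<and> word_eval G ss' (Tab ! a) = letter_val G ss a" if "a < 2 * ?L" for a
    unfolding Tab_def using someI_ex[OF ex[OF that]] that by simp
  define Gf where "Gf a = (if a < 2 * ?L then Tab ! a else [])" for a
  define tr where "tr w = concat (map Gf w)" for w
  define C where "C = sum_list (map length Tab)"
  have lenG: "length (Gf a) \<le> C" for a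
    unfolding Gf_def C_def using elem_le_sum_list[of a "map length Tab"] lT by auto
  have prp: "valid_word ss' (tr w) \<and> word_eval G ss' (tr w) = word_eval G ss w \<and> length (tr w) \<le> C * length w"
    if "valid_word ss w" for w
    using that
  proof (induction w)
    case Nil then show ?case by (simp add: tr_def)
  next
    case (Cons a w)
    then have a: "a < 2 * ?L" and w: "valid_word ss w" by auto
    have trc: "tr (a # w) = Tab ! a @ tr w" using a by (simp add: tr_def Gf_def)
    have IH: "valid_word ss' (tr w)" "word_eval G ss' (tr w) = word_eval G ss w" "length (tr w) \<le> C * length w"
      using Cons.IH[OF w] by auto
    have "word_eval G ss' (tr (a # w)) = word_eval G ss' (Tab ! a) \<otimes>\<^bsub>G\<^esub> word_eval G ss' (tr w)"
      using trc word_eval_append[OF G ss'c] tabok[OF a] IH(1) by simp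
    also have "\<dots> = word_eval G ss (a # w)" using tabok[OF a] IH(2) by simp
    finally have e: "word_eval G ss' (tr (a # w)) = word_eval G ss (a # w)" .
    have "length (tr (a # w)) \<le> C + C * length w"
      using trc lenG[of a] IH(3) a by (simp add: Gf_def)
    then show ?case using e trc tabok[OF a] IH(1) by simp
  qed
  define TC where "TC = list_encode (map list_encode Tab)"
  have dTC: "list_decode (lnth TC a) = Gf a" for a
  proof (cases "a < 2 * ?L")
    case True
    then have "lnth TC a = list_encode (Tab ! a)" unfolding TC_def using lT by (simp add: lnth_eq)
    then show ?thesis using True by (simp add: Gf_def)
  next
    case False
    then have "lnth TC a = 0" unfolding TC_def using lT by (intro lnth_out) (simp add: llen_def)
    then show ?thesis using False by (simp add: Gf_def)
  qed
  define Fin where "Fin = (\<lambda>q::nat. \<lambda>x acc. Suc (prod_encode (x, acc)))"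
  define Fo where "Fo = (\<lambda>q::nat. \<lambda>a acc. foldr (Fin q) (list_decode (lnth TC a)) acc)"
  have enc: "list_encode (tr w) = foldr (Fo y) w 0" for w y
  proof (induction w)
    case Nil then show ?case by (simp add: tr_def)
  next
    case (Cons a w)
    have "foldr (Fo y) (a # w) 0 = foldr (Fin y) (Gf a) (list_encode (tr w))"
      using Cons by (simp add: Fo_def dTC)
    also have "\<dots> = list_encode (Gf a @ tr w)" unfolding Fin_def by (rule app_enc)
    finally show ?case by (simp add: tr_def)
  qed
  have rFin: "rec3 Fin" unfolding rec3_def Fin_def by (intro rI)
  have W: "recursive_fun (\<lambda>q. lnth TC (pfst (psnd q)))" by (intro rI_lnth rI)
  have z: "recursive_fun (\<lambda>q. psnd (psnd q))" by (intro rI)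
  have rFo: "rec3 Fo"
    using rI_foldr[OF rFin W z] unfolding rec3_def Fo_def by (simp add: Fin_def)
  have "recursive_fun (\<lambda>y. foldr (Fo y) (list_decode y) 0)"
    using rI_foldr[OF rFo rI_id rI_const[of 0]] by simp
  then have "recursive_fun (\<lambda>y. list_encode (tr (list_decode y)))" using enc by simp
  then show ?thesis using prp by blast
qed

section \<open>Existence of the depth\<close>

definition DP :: "('a, 'b) monoid_scheme \<Rightarrow> 'a list \<Rightarrow> nat \<Rightarrow> nat \<Rightarrow> bool" where
  "DP G ss n k \<longleftrightarrow> (\<forall>w. valid_word ss w \<and> length w \<le> n \<and> word_eval G ss w \<noteq> \<one>\<^bsub>G\<^esub>
       \<longrightarrow> (\<exists>N. finite_quot_detects G N (word_eval G ss w) \<and> card (rcosets\<^bsub>G\<^esub> N) \<le> k))"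

lemma depth_DP: "depth G ss n = (LEAST k. DP G ss n k)"
  by (simp add: depth_def DP_def)

lemma finite_max_ex:
  assumes "finite A" and "\<forall>a\<in>A. \<exists>k::nat. P a k" and mono: "\<forall>a k k'. P a k \<longrightarrow> k \<le> k' \<longrightarrow> P a k'"
  shows "\<exists>k. \<forall>a\<in>A. P a k"
  using assms(1,2)
proof (induction A rule: finite_induct)
  case empty then show ?case by simp
next
  case (insert x F)
  then obtain k1 where k1: "\<forall>a\<in>F. P a k1" by auto
  obtain k2 where k2: "P x k2" using insert by auto
  have "\<forall>a\<in>insert x F. P a (max k1 k2)"
  proof
    fix a assume "a \<in> insert x F"
    then show "P a (max k1 k2)"
    proof
      assume "a = x" then show ?thesis using k2 mono max.cobounded2 by blast
    next
      assume "a \<in> F" then show ?thesis using k1 mono max.cobounded1 by blast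
    qed
  qed
  then show ?case by blast
qed

lemma depth_ex:
  assumes G: "group G" and rf: "residually_finite G" and ss: "set ss \<subseteq> carrier G"
  shows "\<exists>k. DP G ss n k"
proof -
  let ?A = "{w. set w \<subseteq> {..<2 * length ss} \<and> length w \<le> n}"
  have fin: "finite ?A" by (rule finite_lists_length_le) simp
  let ?P = "\<lambda>w k. valid_word ss w \<and> length w \<le> n \<and> word_eval G ss w \<noteq> \<one>\<^bsub>G\<^esub>
       \<longrightarrow> (\<exists>N. finite_quot_detects G N (word_eval G ss w) \<and> card (rcosets\<^bsub>G\<^esub> N) \<le> k)"
  have "\<forall>w\<in>?A. \<exists>k. ?P w k"
  proof
    fix w
    show "\<exists>k. ?P w k"
    proof (cases "valid_word ss w \<and> word_eval G ss w \<noteq> \<one>\<^bsub>G\<^esub>")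
      case True
      then have "word_eval G ss w \<in> carrier G" using word_eval_closed[OF G ss] by blast
      then obtain N where "finite_quot_detects G N (word_eval G ss w)"
        using rf True unfolding residually_finite_def by blast
      then show ?thesis by blast
    next
      case False
      then have "?P w 0" by blast
      then show ?thesis by (rule exI)
    qed
  qed
  moreover have "\<forall>w k k'. ?P w k \<longrightarrow> k \<le> k' \<longrightarrow> ?P w k'"
  proof (intro allI impI)
    fix w k k' assume a: "?P w k" "k \<le> k'"
      "valid_word ss w \<and> length w \<le> n \<and> word_eval G ss w \<noteq> \<one>\<^bsub>G\<^esub>"
    then obtain N where "finite_quot_detects G N (word_eval G ss w)" "card (rcosets\<^bsub>G\<^esub> N) \<le> k" by blast
    then show "\<exists>N. finite_quot_detects G N (word_eval G ss w) \<and> card (rcosets\<^bsub>G\<^esub> N) \<le> k'"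
      using a(2) by (blast intro: le_trans)
  qed
  ultimately have "\<exists>k. \<forall>w\<in>?A. ?P w k" by (rule finite_max_ex[OF fin])
  then obtain k where k: "\<forall>w\<in>?A. ?P w k" by (rule exE)
  have "DP G ss n k" unfolding DP_def
  proof (intro allI impI)
    fix w assume w: "valid_word ss w \<and> length w \<le> n \<and> word_eval G ss w \<noteq> \<one>\<^bsub>G\<^esub>"
    then have "w \<in> ?A" by (auto simp: valid_word_def)
    then have "?P w k" using k by blast
    then show "\<exists>N. finite_quot_detects G N (word_eval G ss w) \<and> card (rcosets\<^bsub>G\<^esub> N) \<le> k"
      using w by (rule mp)
  qed
  then show ?thesis by blast
qed

lemma depth_spec:
  assumes "group G" "residually_finite G" "set ss \<subseteq> carrier G"
  shows "DP G ss n (depth G ss n)"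
  unfolding depth_DP using depth_ex[OF assms] by (rule LeastI_ex)


section \<open>Detection via codes\<close>

definition Good :: "(nat \<Rightarrow> nat) \<Rightarrow> nat \<Rightarrow> nat \<Rightarrow> nat \<Rightarrow> bool" where
  "Good c L k x \<longleftrightarrow> tvalid (pfst x) \<and> llen (pfst x) \<le> k \<and> llen (psnd x) = L
      \<and> (\<forall>v\<in>set (list_decode (psnd x)). v < llen (pfst x)) \<and> c x = 1"
definition Bnd :: "nat \<Rightarrow> nat \<Rightarrow> nat" where
  "Bnd L k = Suc (prod_encode (Ebd k (Ebd k k), Ebd L k))"
definition Det :: "(nat \<Rightarrow> nat) \<Rightarrow> nat \<Rightarrow> nat \<Rightarrow> nat \<Rightarrow> bool" where
  "Det c L k W \<longleftrightarrow> (\<exists>x<Bnd L k. Good c L k x \<and> teval (pfst x) (psnd x) W \<noteq> tone (pfst x))"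
definition CFQspec :: "('a, 'b) monoid_scheme \<Rightarrow> 'a list \<Rightarrow> (nat \<Rightarrow> nat) \<Rightarrow> bool" where
  "CFQspec G ss c \<longleftrightarrow> (\<forall>t fl. valid_table t \<and> length fl = length ss \<and> (\<forall>x\<in>set fl. x < length t) \<longrightarrow>
        (c (marked_code t fl) = 1 \<longleftrightarrow> extends_to_hom G ss t fl))"

lemma CFQ_wrt_iff: "CFQ_wrt G ss \<longleftrightarrow> (\<exists>c. recursive_fun c \<and> CFQspec G ss c)"
  by (simp add: CFQ_wrt_def CFQspec_def)

lemma rP_Det:
  assumes c: "recursive_fun c" and K: "recursive_fun K" and W: "recursive_fun W"
  shows "recP (\<lambda>y. Det c L (K y) (W y))"
  unfolding Det_def Good_def Bnd_def
  by (intro rP_bex rI_Suc rI_penc rI_Ebd rI_comp[OF K] rP_conj rP_tvalid rP_le rP_eq rP_lall rP_less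
      rI_llen rI_comp[OF c] rP_not rI_teval rI_tone rI_comp[OF W] rI)

lemma marked_code_dec: "marked_code (tab (pfst x)) (list_decode (psnd x)) = x"
  by (simp add: marked_code_def tab_def comp_def)

lemma detect_iff:
  assumes G: "group G" and ss: "set ss \<subseteq> carrier G" and cs: "CFQspec G ss c" and u: "valid_word ss u"
  shows "(\<exists>N. finite_quot_detects G N (word_eval G ss u) \<and> card (rcosets\<^bsub>G\<^esub> N) \<le> k)
          \<longleftrightarrow> Det c (length ss) k (list_encode u)"
proof
  let ?g = "word_eval G ss u"
  have gc: "?g \<in> carrier G" by (rule word_eval_closed[OF G ss u])
  assume "\<exists>N. finite_quot_detects G N ?g \<and> card (rcosets\<^bsub>G\<^esub> N) \<le> k"
  then obtain N where fq: "finite_quot_detects G N ?g" and cd: "card (rcosets\<^bsub>G\<^esub> N) \<le> k" by blast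
  from fq have nN: "N \<lhd> G" and fin: "finite (rcosets\<^bsub>G\<^esub> N)" and gN: "?g \<notin> N"
    by (auto simp: finite_quot_detects_def)
  obtain t \<psi> where v: "valid_table t" and hom: "\<psi> \<in> hom G (table_group t)"
    and ne: "\<psi> ?g \<noteq> \<one>\<^bsub>table_group t\<^esub>" and lt: "length t = card (rcosets\<^bsub>G\<^esub> N)"
    using quotient_table[OF G nN fin gc gN] by blast
  have ltk: "length t \<le> k" using lt cd by simp
  define fl where "fl = map \<psi> ss"
  have psic: "x \<in> carrier G \<Longrightarrow> \<psi> x < length t" for x
    using hom by (auto simp: hom_def Pi_def)
  have flt: "\<forall>x\<in>set fl. x < length t" using ss psic by (auto simp: fl_def)
  have lfl: "length fl = length ss" by (simp add: fl_def)
  have ext: "extends_to_hom G ss t fl" unfolding extends_to_hom_def fl_def using hom by auto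
  have cx: "c (marked_code t fl) = 1" using cs v lfl flt ext unfolding CFQspec_def by blast
  define x where "x = marked_code t fl"
  have px: "pfst x = list_encode (map list_encode t)" and sx: "psnd x = list_encode fl"
    by (simp_all add: x_def marked_code_def)
  have tabx: "tab (pfst x) = t" using px tab_encode by simp
  have rows: "rowsok t" by (rule valid_table_rowsok[OF v])
  have good: "Good c (length ss) k x"
    unfolding Good_def using tabx tvalid_iff[of "pfst x"] v ltk length_tab[of "pfst x"] sx lfl flt cx x_def
    by (simp add: llen_def)
  have b1: "pfst x \<le> Ebd k (Ebd k k)" unfolding px
  proof (rule list_encode_bound)
    show "length (map list_encode t) \<le> k" using ltk by simp
    show "\<forall>y\<in>set (map list_encode t). y \<le> Ebd k k"
    proof
      fix y assume "y \<in> set (map list_encode t)"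
      then obtain r where r: "r \<in> set t" "y = list_encode r" by auto
      have "length r \<le> k" using rows r ltk unfolding rowsok_def by auto
      moreover have "\<forall>z\<in>set r. z \<le> k" using rows r ltk unfolding rowsok_def by (meson less_imp_le_nat order_trans)
      ultimately show "y \<le> Ebd k k" using r list_encode_bound by simp
    qed
  qed
  have b2: "psnd x \<le> Ebd (length ss) k" unfolding sx
    using list_encode_bound[of fl "length ss" k] lfl flt ltk by fastforce
  have "x = prod_encode (pfst x, psnd x)" by simp
  also have "\<dots> \<le> prod_encode (Ebd k (Ebd k k), Ebd (length ss) k)" by (rule prod_encode_mono[OF b1 b2])
  finally have xb: "x < Bnd (length ss) k" unfolding Bnd_def by simp
  have vt: "valid_table (tab (pfst x))" using tabx v by simp
  have homx: "\<psi> \<in> hom G (table_group (tab (pfst x)))" using tabx hom by simp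
  have Fl: "length (list_decode (psnd x)) = length ss" using sx lfl by simp
  have Fi: "\<forall>i<length ss. \<psi> (ss ! i) = list_decode (psnd x) ! i" using sx by (simp add: fl_def)
  have "\<psi> ?g = teval (pfst x) (psnd x) (list_encode u)"
    by (rule teval_eq[OF G ss vt homx Fl Fi u])
  moreover have "tone (pfst x) = \<one>\<^bsub>table_group t\<^esub>" using tone_eq[OF vt] tabx by simp
  ultimately have "teval (pfst x) (psnd x) (list_encode u) \<noteq> tone (pfst x)" using ne by simp
  then show "Det c (length ss) k (list_encode u)" unfolding Det_def using xb good by blast
next
  let ?g = "word_eval G ss u"
  have gc: "?g \<in> carrier G" by (rule word_eval_closed[OF G ss u])
  assume "Det c (length ss) k (list_encode u)"
  then obtain x where good: "Good c (length ss) k x" and ne: "teval (pfst x) (psnd x) (list_encode u) \<noteq> tone (pfst x)"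
    unfolding Det_def by blast
  define t where "t = tab (pfst x)"
  define fl where "fl = list_decode (psnd x)"
  have v: "valid_table t" using good tvalid_iff unfolding Good_def t_def by blast
  have lfl: "length fl = length ss" using good unfolding Good_def fl_def llen_def by simp
  have flt: "\<forall>y\<in>set fl. y < length t" using good unfolding Good_def fl_def t_def by simp
  have "c (marked_code t fl) = 1" using good marked_code_dec[of x] unfolding Good_def t_def fl_def by simp
  then have "extends_to_hom G ss t fl" using cs v lfl flt unfolding CFQspec_def by blast
  then obtain \<psi> where hom: "\<psi> \<in> hom G (table_group t)" and Fi: "\<forall>i<length ss. \<psi> (ss ! i) = fl ! i"
    unfolding extends_to_hom_def by blast
  have "\<psi> ?g = teval (pfst x) (psnd x) (list_encode u)"
    by (rule teval_eq[OF G ss v[unfolded t_def] hom[unfolded t_def] lfl[unfolded fl_def] Fi[unfolded fl_def] u])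
  moreover have "tone (pfst x) = \<one>\<^bsub>table_group t\<^esub>" using tone_eq v unfolding t_def by simp
  ultimately have "\<psi> ?g \<noteq> \<one>\<^bsub>table_group t\<^esub>" using ne by simp
  then obtain N where "finite_quot_detects G N ?g" "card (rcosets\<^bsub>G\<^esub> N) \<le> length t"
    using kernel_detect[OF G v hom gc] by blast
  moreover have "length t \<le> k" using good unfolding Good_def t_def by simp
  ultimately show "\<exists>N. finite_quot_detects G N ?g \<and> card (rcosets\<^bsub>G\<^esub> N) \<le> k" by auto
qed

lemma no_detect_one:
  assumes "finite_quot_detects G N \<one>\<^bsub>G\<^esub>" shows False
proof -
  have "N \<lhd> G" using assms by (simp add: finite_quot_detects_def)
  then have "\<one>\<^bsub>G\<^esub> \<in> N" using normal_imp_subgroup subgroup.one_closed by blast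
  then show False using assms by (simp add: finite_quot_detects_def)
qed


lemma wps_iff: "m \<in> word_problem_set G ss \<longleftrightarrow> valid_word ss (list_decode m) \<and> word_eval G ss (list_decode m) = \<one>\<^bsub>G\<^esub>"
proof
  assume "m \<in> word_problem_set G ss"
  then obtain w where "m = list_encode w" "valid_word ss w" "word_eval G ss w = \<one>\<^bsub>G\<^esub>"
    unfolding word_problem_set_def by blast
  then show "valid_word ss (list_decode m) \<and> word_eval G ss (list_decode m) = \<one>\<^bsub>G\<^esub>" by simp
next
  assume "valid_word ss (list_decode m) \<and> word_eval G ss (list_decode m) = \<one>\<^bsub>G\<^esub>"
  then show "m \<in> word_problem_set G ss" unfolding word_problem_set_def
    by (intro CollectI exI[of _ "list_decode m"]) simp
qed

lemma part1:
  assumes G: "group G" and rf: "residually_finite G" and g2: "gen_list G ss2" and h: "recursive_fun h"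
    and hb: "\<forall>n. depth G ss2 n \<le> h n" and g0: "gen_list G ss0" and cfq: "CFQ_wrt G ss0"
  shows "solvable_WP G"
proof -
  obtain c where c: "recursive_fun c" and cs: "CFQspec G ss0 c" using cfq CFQ_wrt_iff by blast
  obtain tr C where tr: "\<forall>w. valid_word ss0 w \<longrightarrow> valid_word ss2 (tr w) \<and> word_eval G ss2 (tr w) = word_eval G ss0 w
                      \<and> length (tr w) \<le> C * length w"
    using translate[OF G g0 g2] by blast
  have ss0: "set ss0 \<subseteq> carrier G" and ss2: "set ss2 \<subseteq> carrier G" using g0 g2 by (auto simp: gen_list_def)
  define L0 where "L0 = length ss0"
  define P where "P m \<longleftrightarrow> (\<forall>v\<in>set (list_decode m). v < 2 * L0) \<and> \<not> Det c L0 (h (C * llen m)) m" for m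
  have rP: "recP P" unfolding P_def
    by (intro rP_conj rP_lall rP_not rP_Det[OF c] rI_comp[OF h] rP_less rI_llen rI)
  have key: "m \<in> word_problem_set G ss0 \<longleftrightarrow> P m" for m
  proof -
    define w where "w = list_decode m"
    have m: "m = list_encode w" by (simp add: w_def)
    have vw: "valid_word ss0 w \<longleftrightarrow> (\<forall>v\<in>set (list_decode m). v < 2 * L0)"
      by (simp add: valid_word_def w_def L0_def)
    show ?thesis
    proof (cases "valid_word ss0 w")
      case False
      then show ?thesis unfolding wps_iff P_def using vw w_def by simp
    next
      case True
      let ?K = "h (C * length w)"
      have D: "Det c L0 ?K m \<longleftrightarrow> (\<exists>N. finite_quot_detects G N (word_eval G ss0 w) \<and> card (rcosets\<^bsub>G\<^esub> N) \<le> ?K)"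
        using detect_iff[OF G ss0 cs True, of ?K] m L0_def by simp
      have "word_eval G ss0 w = \<one>\<^bsub>G\<^esub> \<longleftrightarrow> \<not> Det c L0 ?K m"
      proof
        assume "word_eval G ss0 w = \<one>\<^bsub>G\<^esub>"
        then show "\<not> Det c L0 ?K m" using D no_detect_one by metis
      next
        assume nd: "\<not> Det c L0 ?K m"
        show "word_eval G ss0 w = \<one>\<^bsub>G\<^esub>"
        proof (rule ccontr)
          assume ne: "word_eval G ss0 w \<noteq> \<one>\<^bsub>G\<^esub>"
          have t: "valid_word ss2 (tr w)" "word_eval G ss2 (tr w) = word_eval G ss0 w" "length (tr w) \<le> C * length w"
            using tr True by auto
          have "DP G ss2 (C * length w) (depth G ss2 (C * length w))" by (rule depth_spec[OF G rf ss2])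
          then obtain N where "finite_quot_detects G N (word_eval G ss2 (tr w))"
              "card (rcosets\<^bsub>G\<^esub> N) \<le> depth G ss2 (C * length w)"
            unfolding DP_def using t ne by auto
          moreover have "depth G ss2 (C * length w) \<le> ?K" using hb by simp
          ultimately have "\<exists>N. finite_quot_detects G N (word_eval G ss0 w) \<and> card (rcosets\<^bsub>G\<^esub> N) \<le> ?K"
            using t(2) by auto
          then show False using D nd by simp
        qed
      qed
      moreover have "llen m = length w" by (simp add: llen_def w_def)
      ultimately show ?thesis unfolding wps_iff P_def using vw True w_def by simp
    qed
  qed
  have "decidable_set (word_problem_set G ss0)"
    unfolding decidable_set_def using rP key unfolding recP_def
    by (intro exI[of _ "\<lambda>x. if P x then 1 else 0"]) simp
  then show ?thesis unfolding solvable_WP_def using g0 by blast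
qed

lemma part2:
  assumes G: "group G" and rf: "residually_finite G" and g0: "gen_list G ss0" and c: "recursive_fun c"
    and cs: "CFQspec G ss0 c" and g1: "gen_list G ss1" and d: "recursive_fun d"
    and dd: "\<forall>n. d n = (if n \<in> word_problem_set G ss1 then 1 else 0)" and gs: "gen_list G ss"
  shows "recursive_fun (depth G ss)"
proof -
  obtain tr0 C0 where tr0: "\<forall>w. valid_word ss w \<longrightarrow> valid_word ss0 (tr0 w) \<and> word_eval G ss0 (tr0 w) = word_eval G ss w
                      \<and> length (tr0 w) \<le> C0 * length w"
    and r0: "recursive_fun (\<lambda>y. list_encode (tr0 (list_decode y)))"
    using translate[OF G gs g0] by blast
  obtain tr1 C1 where tr1: "\<forall>w. valid_word ss w \<longrightarrow> valid_word ss1 (tr1 w) \<and> word_eval G ss1 (tr1 w) = word_eval G ss w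
                      \<and> length (tr1 w) \<le> C1 * length w"
    and r1: "recursive_fun (\<lambda>y. list_encode (tr1 (list_decode y)))"
    using translate[OF G gs g1] by blast
  have ss0: "set ss0 \<subseteq> carrier G" and ssc: "set ss \<subseteq> carrier G" using g0 gs by (auto simp: gen_list_def)
  define L where "L = length ss"
  define L0 where "L0 = length ss0"
  define Q where "Q n k \<longleftrightarrow> (\<forall>y<Suc (Ebd n (2 * L)).
       ((\<forall>v\<in>set (list_decode y). v < 2 * L) \<and> llen y \<le> n \<and> d (list_encode (tr1 (list_decode y))) \<noteq> 1)
         \<longrightarrow> Det c L0 k (list_encode (tr0 (list_decode y))))" for n k
  have eqv: "DP G ss n k \<longleftrightarrow> Q n k" for n k
  proof
    assume dp: "DP G ss n k"
    show "Q n k" unfolding Q_def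
    proof (intro allI impI)
      fix y assume "y < Suc (Ebd n (2 * L))"
        and h: "(\<forall>v\<in>set (list_decode y). v < 2 * L) \<and> llen y \<le> n \<and> d (list_encode (tr1 (list_decode y))) \<noteq> 1"
      define w where "w = list_decode y"
      have vw: "valid_word ss w" using h by (simp add: valid_word_def w_def L_def)
      have lw: "length w \<le> n" using h by (simp add: llen_def w_def)
      have t1: "valid_word ss1 (tr1 w)" "word_eval G ss1 (tr1 w) = word_eval G ss w" using tr1 vw by auto
      have "list_encode (tr1 w) \<notin> word_problem_set G ss1" using h dd w_def by auto
      then have "word_eval G ss1 (tr1 w) \<noteq> \<one>\<^bsub>G\<^esub>" using t1 by (simp add: wps_iff)
      then have ne: "word_eval G ss w \<noteq> \<one>\<^bsub>G\<^esub>" using t1 by simp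
      then obtain N where N: "finite_quot_detects G N (word_eval G ss w)" "card (rcosets\<^bsub>G\<^esub> N) \<le> k"
        using dp vw lw unfolding DP_def by blast
      have t0: "valid_word ss0 (tr0 w)" "word_eval G ss0 (tr0 w) = word_eval G ss w" using tr0 vw by auto
      have "Det c (length ss0) k (list_encode (tr0 w))"
        using detect_iff[OF G ss0 cs t0(1), of k] N t0(2) by auto
      then show "Det c L0 k (list_encode (tr0 (list_decode y)))" by (simp add: L0_def w_def)
    qed
  next
    assume q: "Q n k"
    show "DP G ss n k" unfolding DP_def
    proof (intro allI impI)
      fix w assume h: "valid_word ss w \<and> length w \<le> n \<and> word_eval G ss w \<noteq> \<one>\<^bsub>G\<^esub>"
      define y where "y = list_encode w"
      have "\<forall>x\<in>set w. x \<le> 2 * L" using h by (auto simp: valid_word_def L_def intro: less_imp_le)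
      then have "y \<le> Ebd n (2 * L)" unfolding y_def
        using list_encode_bound[of w n "2 * L"] h by simp
      then have yb: "y < Suc (Ebd n (2 * L))" by simp
      have t1: "valid_word ss1 (tr1 w)" "word_eval G ss1 (tr1 w) = word_eval G ss w" using tr1 h by auto
      have "list_encode (tr1 w) \<notin> word_problem_set G ss1" using t1 h by (simp add: wps_iff)
      then have dn: "d (list_encode (tr1 (list_decode y))) \<noteq> 1" using dd by (simp add: y_def)
      have "(\<forall>v\<in>set (list_decode y). v < 2 * L) \<and> llen y \<le> n"
        using h by (simp add: y_def valid_word_def L_def llen_def)
      moreover have "y < Suc (Ebd n (2 * L)) \<longrightarrow> ((\<forall>v\<in>set (list_decode y). v < 2 * L) \<and> llen y \<le> n \<and> d (list_encode (tr1 (list_decode y))) \<noteq> 1)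
         \<longrightarrow> Det c L0 k (list_encode (tr0 (list_decode y)))" using q unfolding Q_def by blast
      ultimately have "Det c L0 k (list_encode (tr0 (list_decode y)))" using yb dn by blast
      then have "Det c L0 k (list_encode (tr0 w))" by (simp add: y_def)
      moreover have t0: "valid_word ss0 (tr0 w)" "word_eval G ss0 (tr0 w) = word_eval G ss w" using tr0 h by auto
      ultimately show "\<exists>N. finite_quot_detects G N (word_eval G ss w) \<and> card (rcosets\<^bsub>G\<^esub> N) \<le> k"
        using detect_iff[OF G ss0 cs t0(1), of k] L0_def by simp
    qed
  qed
  have dep: "depth G ss n = (LEAST k. (if Q n k then 0 else 1) = (0::nat))" for n
    unfolding depth_DP eqv by simp
  have F: "rec2 (\<lambda>k n. if Q n k then 0 else 1)" unfolding rec2_def Q_def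
    by (intro rI_if rP_ball rP_imp rP_conj rP_lall rP_le rP_not rP_eq rP_Det[OF c] rI_comp[OF d] rI_comp[OF r1]
        rI_comp[OF r0] rI_Suc rI_Ebd rP_less rI_llen rI)
  have ex: "\<exists>k. (if Q n k then 0 else 1) = (0::nat)" for n
    using depth_ex[OF G rf ssc, of n] eqv by auto
  have "recursive_fun (\<lambda>n. LEAST k. (if Q n k then 0 else 1) = (0::nat))"
    by (rule rec_mu[OF F ex])
  moreover have "depth G ss = (\<lambda>n. LEAST k. (if Q n k then 0 else 1) = (0::nat))"
    by (rule HOL.ext) (rule dep)
  ultimately show ?thesis by simp
qed

theorem mainTheorem14:
  fixes G :: "('a, 'b) monoid_scheme"
  assumes "group G" and "fin_gen G" and "residually_finite G" and "CFQ G"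
  shows "((\<exists>ss h. gen_list G ss \<and> recursive_fun h \<and> (\<forall>n. depth G ss n \<le> h n))
            \<longrightarrow> solvable_WP G)
       \<and> (solvable_WP G \<longrightarrow> (\<forall>ss. gen_list G ss \<longrightarrow> recursive_fun (depth G ss)))
       \<and> (solvable_WP G \<longleftrightarrow> (\<forall>ss. gen_list G ss \<longrightarrow> recursive_fun (depth G ss)))"
proof -
  note G = assms(1) and rf = assms(3)
  obtain ss0 where g0: "gen_list G ss0" and cfq: "CFQ_wrt G ss0" using assms(4) unfolding CFQ_def by blast
  obtain c where c: "recursive_fun c" and cs: "CFQspec G ss0 c" using cfq CFQ_wrt_iff by blast
  have P1: "(\<exists>ss h. gen_list G ss \<and> recursive_fun h \<and> (\<forall>n. depth G ss n \<le> h n)) \<longrightarrow> solvable_WP G"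
    using part1[OF G rf _ _ _ g0 cfq] by blast
  have P2: "solvable_WP G \<longrightarrow> (\<forall>ss. gen_list G ss \<longrightarrow> recursive_fun (depth G ss))"
  proof (intro impI allI)
    fix ss assume sw: "solvable_WP G" and gs: "gen_list G ss"
    obtain ss1 where g1: "gen_list G ss1" and ds: "decidable_set (word_problem_set G ss1)"
      using sw unfolding solvable_WP_def by blast
    obtain d where d: "recursive_fun d" and dd: "\<forall>n. d n = (if n \<in> word_problem_set G ss1 then 1 else 0)"
      using ds unfolding decidable_set_def by blast
    show "recursive_fun (depth G ss)" by (rule part2[OF G rf g0 c cs g1 d dd gs])
  qed
  have P3: "(\<forall>ss. gen_list G ss \<longrightarrow> recursive_fun (depth G ss)) \<longrightarrow> solvable_WP G"
  proof
    assume a: "\<forall>ss. gen_list G ss \<longrightarrow> recursive_fun (depth G ss)"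
    obtain ss where gs: "gen_list G ss" using assms(2) unfolding fin_gen_def by blast
    then have "recursive_fun (depth G ss)" using a by blast
    then show "solvable_WP G" using P1 gs by blast
  qed
  show ?thesis using P1 P2 P3 by blast
qed


end
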